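(* Let $(X,d)$ be a separable metric space admitting a weak convergence and let $p\ge1$. Suppose $(\Omega,\mathcal{F},\mathbb{P})$ is a probability space with expectation $\mathbb{E}$ supporting an independent, identically distributed sequence $Y_1,Y_2,\ldots$ of $X$-valued random variables with common distribution $\mu$, and let $\bar\mu_n:=\frac1n\sum_{i=1}^n\delta_{Y_i}$. If $\int_X d^{p-1}(x,y)\,d\mu(y)=\mathbb{E}[d^{p-1}(x,Y_1)]<\infty$ for some (equivalently, all) $x\in X$, then $$\max_{\bar x_n\in M_p(\bar\mu_n)}\min_{x\in M_p(\mu)} d(\bar x_n,x)\to 0$$ holds $\mathbb{P}$-almost surely.
   Context: A convergence $c$ on a set $X$ is a rule assigning at most one point of $X$ as the "limit" of each sequence in $X$, such that whenever a sequence has limit $x$, every subsequence also has limit $x$. A convergence $w$ on $X$ is a weak convergence for $(X,d)$ if: (W1) whenever $\sup_n d(x_n,y)<\infty$ for some $y$, some subsequence converges in $w$ to some point of $X$; (W2) whenever $x_n\to x$ in $w$, $d(x,y)\le\liminf_n d(x_n,y)$ for all $y\in X$; (W3) whenever $x_n\to x$ in $w$ and $d(x_n,y)\to d(x,y)$ for some $y\in X$, then $d(x_n,x)\to0$. $(X,d)$ admits a weak convergence if such a $w$ exists. For a Borel probability measure $\nu$ with $\int d^{p-1}(x,y)\,d\nu(y)<\infty$, $W_p(\nu,x,x'):=\int_X (d^p(x,y)-d^p(x',y))\,d\nu(y)$ and $M_p(\nu):=\{x\in X: W_p(\nu,x,x')\le 0 \text{ for all } x'\in X\}$ (the Fréchet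 $p$-mean set). *)

theory Defs
  imports "HOL-Probability.Probability"
begin

definition is_convergence :: "((nat \<Rightarrow> 'a) \<Rightarrow> 'a \<Rightarrow> bool) \<Rightarrow> bool" where
  "is_convergence c \<longleftrightarrow>
     (\<forall>s x y. c s x \<and> c s y \<longrightarrow> x = y) \<and>
     (\<forall>s x (r::nat\<Rightarrow>nat). c s x \<and> strict_mono r \<longrightarrow> c (s \<circ> r) x)"

definition is_weak_convergence :: "((nat \<Rightarrow> 'a::metric_space) \<Rightarrow> 'a \<Rightarrow> bool) \<Rightarrow> bool" where
  "is_weak_convergence c \<longleftrightarrow> is_convergence c \<and>
     (\<forall>s y. (\<exists>B. \<forall>n. dist (s n) y \<le> B) \<longrightarrow> (\<exists>(r::nat\<Rightarrow>nat) x. strict_mono r \<and> c (s \<circ> r) x)) \<and>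
     (\<forall>s x. c s x \<longrightarrow> (\<forall>y. ereal (dist x y) \<le> liminf (\<lambda>n. ereal (dist (s n) y)))) \<and>
     (\<forall>s x y. c s x \<and> (\<lambda>n. dist (s n) y) \<longlonglongrightarrow> dist x y \<longrightarrow> (\<lambda>n. dist (s n) x) \<longlonglongrightarrow> 0)"

definition admits_weak_convergence :: "'a::metric_space itself \<Rightarrow> bool" where
  "admits_weak_convergence _ \<longleftrightarrow> (\<exists>c::(nat \<Rightarrow> 'a) \<Rightarrow> 'a \<Rightarrow> bool. is_weak_convergence c)"

definition separable_space :: "'a::metric_space itself \<Rightarrow> bool" where
  "separable_space _ \<longleftrightarrow> (\<exists>D::'a set. countable D \<and> closure D = UNIV)"

definition Wp :: "real \<Rightarrow> 'a::metric_space measure \<Rightarrow> 'a \<Rightarrow> 'a \<Rightarrow> real" where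
  "Wp p \<nu> x x' = (\<integral>y. dist x y powr p - dist x' y powr p \<partial>\<nu>)"

definition Mp :: "real \<Rightarrow> 'a::metric_space measure \<Rightarrow> 'a set" where
  "Mp p \<nu> = {x. \<forall>x'. Wp p \<nu> x x' \<le> 0}"

text \<open>Empirical measure (1/n) sum_{i<n} delta_{Y_i omega} (for n \<ge> 1).\<close>
definition empirical_measure :: "(nat \<Rightarrow> 'b \<Rightarrow> 'a) \<Rightarrow> nat \<Rightarrow> 'b \<Rightarrow> 'a measure" where
  "empirical_measure Y n \<omega> = measure_pmf (map_pmf (\<lambda>i. Y i \<omega>) (pmf_of_set {..<n}))"

end

theory Submission
  imports Defs
begin

definition kk :: "real \<Rightarrow> nat \<Rightarrow> nat" where "kk \<alpha> n = nat \<lfloor>\<alpha>^n\<rfloor>"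

context fixes \<alpha> :: real assumes a1: "\<alpha> > 1"
begin

lemma kk_pow_ge1: "1 \<le> \<alpha>^n" using a1 by (simp add: one_le_power)

lemma kk_real: "real (kk \<alpha> n) = of_int \<lfloor>\<alpha>^n\<rfloor>"
  unfolding kk_def using kk_pow_ge1[of n] by simp

lemma kk_ge1: "1 \<le> kk \<alpha> n"
proof -
  have "1 \<le> \<lfloor>\<alpha>^n\<rfloor>" using kk_pow_ge1[of n] by simp
  then show ?thesis unfolding kk_def by (subst le_nat_iff) auto
qed

lemma kk_le: "real (kk \<alpha> n) \<le> \<alpha>^n"
  unfolding kk_real by simp

lemma kk_gt: "\<alpha>^n - 1 < real (kk \<alpha> n)"
  unfolding kk_real by linarith

lemma kk_half: "\<alpha>^n / 2 \<le> real (kk \<alpha> n)"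
  using kk_gt[of n] kk_ge1[of n] by linarith

lemma kk_mono: "mono (kk \<alpha>)"
proof (rule monoI)
  fix n m :: nat assume "n \<le> m"
  then have "\<alpha>^n \<le> \<alpha>^m" using a1 by (intro power_increasing) auto
  then show "kk \<alpha> n \<le> kk \<alpha> m" unfolding kk_def by (intro nat_mono floor_mono)
qed

lemma kk_lim: "filterlim (kk \<alpha>) at_top sequentially"
proof (subst filterlim_at_top, intro allI)
  fix Z :: nat
  obtain n0 where n0: "real Z + 1 < \<alpha>^n0" using real_arch_pow[OF a1] by blast
  show "eventually (\<lambda>n. Z \<le> kk \<alpha> n) sequentially"
  proof (rule eventually_sequentiallyI[of n0])
    fix n assume "n0 \<le> n"
    then have "\<alpha>^n0 \<le> \<alpha>^n" using a1 by (intro power_increasing) auto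
    then have "real Z < real (kk \<alpha> n)" using n0 kk_gt[of n] by linarith
    then show "Z \<le> kk \<alpha> n" by simp
  qed
qed

lemma kk_ratio: "(\<lambda>n. real (kk \<alpha> (Suc n)) / real (kk \<alpha> n)) \<longlonglongrightarrow> \<alpha>"
proof (rule tendsto_sandwich)
  define q where "q = inverse \<alpha>"
  have q: "0 < q" "q < 1" unfolding q_def using a1 by (auto simp: field_simps)
  have qp: "q^n = 1 / \<alpha>^n" for n unfolding q_def by (simp add: power_inverse divide_inverse)
  show "eventually (\<lambda>n. \<alpha> - q^n \<le> real (kk \<alpha> (Suc n)) / real (kk \<alpha> n)) sequentially"
  proof (rule always_eventually, intro allI)
    fix n
    have pos: "0 < \<alpha>^n" using a1 by simp
    have "\<alpha> - q^n = (\<alpha>^(Suc n) - 1) / \<alpha>^n" using pos unfolding qp by (simp add: diff_divide_distrib)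
    also have "\<dots> \<le> real (kk \<alpha> (Suc n)) / \<alpha>^n"
      using kk_gt[of "Suc n"] pos by (intro divide_right_mono) auto
    also have "\<dots> \<le> real (kk \<alpha> (Suc n)) / real (kk \<alpha> n)"
      using kk_le[of n] kk_ge1[of n] by (intro divide_left_mono) auto
    finally show "\<alpha> - q^n \<le> real (kk \<alpha> (Suc n)) / real (kk \<alpha> n)" .
  qed
  show "eventually (\<lambda>n. real (kk \<alpha> (Suc n)) / real (kk \<alpha> n) \<le> \<alpha> / (1 - q^n)) sequentially"
  proof (rule eventually_sequentiallyI[of 1])
    fix n :: nat assume n: "1 \<le> n"
    have pos: "1 < \<alpha>^n" using a1 n by (simp add: one_less_power)
    have "real (kk \<alpha> (Suc n)) / real (kk \<alpha> n) \<le> \<alpha>^(Suc n) / real (kk \<alpha> n)"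
      using kk_le[of "Suc n"] kk_ge1[of n] by (intro divide_right_mono) auto
    also have "\<dots> \<le> \<alpha>^(Suc n) / (\<alpha>^n - 1)"
      using kk_gt[of n] pos a1 by (intro divide_left_mono) auto
    also have "\<dots> = \<alpha> / (1 - q^n)" using pos unfolding qp by (simp add: field_simps)
    finally show "real (kk \<alpha> (Suc n)) / real (kk \<alpha> n) \<le> \<alpha> / (1 - q^n)" .
  qed
  have "(\<lambda>n. q^n) \<longlonglongrightarrow> 0" using q by (intro LIMSEQ_power_zero) auto
  then have "(\<lambda>n. \<alpha> - q^n) \<longlonglongrightarrow> \<alpha> - 0" by (rule tendsto_diff[OF tendsto_const])
  then show "(\<lambda>n. \<alpha> - q^n) \<longlonglongrightarrow> \<alpha>" by simp
  have "(\<lambda>n. \<alpha> / (1 - q^n)) \<longlonglongrightarrow> \<alpha> / (1 - 0)"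
    using \<open>(\<lambda>n. q^n) \<longlonglongrightarrow> 0\<close> by (intro tendsto_divide tendsto_diff tendsto_const) auto
  then show "(\<lambda>n. \<alpha> / (1 - q^n)) \<longlonglongrightarrow> \<alpha>" by simp
qed

end

lemma interp_bounds:
  fixes S :: "nat \<Rightarrow> real" and k :: "nat \<Rightarrow> nat"
  assumes Smono: "mono S" and S0: "\<And>N. 0 \<le> S N"
    and kmono: "mono k" and k1: "\<And>n. 1 \<le> k n" and klim: "filterlim k at_top sequentially"
    and ratio: "(\<lambda>n. real (k (Suc n)) / real (k n)) \<longlonglongrightarrow> \<alpha>"
    and lim: "(\<lambda>n. S (k n) / real (k n)) \<longlonglongrightarrow> m"
    and e: "e > 0" and a: "\<alpha> > 0"
  shows "eventually (\<lambda>N. S N / real N \<le> (m + e) * (\<alpha> + e) \<and> (m - e) / (\<alpha> + e) \<le> S N / real N) sequentially"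
proof -
  have "eventually (\<lambda>n. \<bar>S (k n) / real (k n) - m\<bar> < e) sequentially"
    using lim e by (simp add: tendsto_iff dist_real_def)
  moreover have "eventually (\<lambda>n. \<bar>real (k (Suc n)) / real (k n) - \<alpha>\<bar> < e) sequentially"
    using ratio e by (simp add: tendsto_iff dist_real_def)
  ultimately have "eventually (\<lambda>n. \<bar>S (k n) / real (k n) - m\<bar> < e \<and> \<bar>real (k (Suc n)) / real (k n) - \<alpha>\<bar> < e) sequentially"
    by (rule eventually_conj)
  then obtain n0 where n0: "\<And>n. n \<ge> n0 \<Longrightarrow> \<bar>S (k n) / real (k n) - m\<bar> < e \<and> \<bar>real (k (Suc n)) / real (k n) - \<alpha>\<bar> < e"
    by (auto simp: eventually_sequentially)
  show ?thesis
  proof (rule eventually_sequentiallyI[of "k n0"])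
    fix N assume N: "k n0 \<le> N"
    have ex: "\<exists>n. N < k (Suc n)"
    proof -
      have "eventually (\<lambda>n. Suc N \<le> k n) sequentially" using klim by (simp add: filterlim_at_top)
      then obtain n1 where "\<forall>n\<ge>n1. Suc N \<le> k n" by (auto simp: eventually_sequentially)
      then have "N < k (Suc n1)" using Suc_le_eq le_SucI by blast
      then show ?thesis by blast
    qed
    define n where "n = (LEAST n. N < k (Suc n))"
    have n1: "N < k (Suc n)" unfolding n_def using ex by (rule LeastI_ex)
    have n2: "k n \<le> N"
    proof (cases n)
      case 0
      then show ?thesis using N monoD[OF kmono, of 0 n0] by simp
    next
      case (Suc n')
      have "n' < (LEAST n. N < k (Suc n))" using Suc n_def by simp
      then have "\<not> N < k (Suc n')" by (rule not_less_Least)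
      then show ?thesis using Suc by simp
    qed
    have n3: "n0 \<le> n"
    proof (rule ccontr)
      assume "\<not> n0 \<le> n"
      then have "Suc n \<le> n0" by simp
      then have "k (Suc n) \<le> k n0" using kmono by (simp add: monoD)
      then show False using n1 N by simp
    qed
    have Npos: "0 < real N" using N k1[of n0] by simp
    have kpos: "0 < real (k j)" for j using k1[of j] by simp
    have A1: "\<bar>S (k n) / real (k n) - m\<bar> < e" and R1: "\<bar>real (k (Suc n)) / real (k n) - \<alpha>\<bar> < e"
      using n0[OF n3] by auto
    have A2: "\<bar>S (k (Suc n)) / real (k (Suc n)) - m\<bar> < e" using n0[of "Suc n"] n3 by auto
    have up: "S N / real N \<le> (m + e) * (\<alpha> + e)"
    proof -
      have h: "S N \<le> S (k (Suc n))" using n1 Smono by (simp add: monoD)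
      have "S N / real N \<le> S (k (Suc n)) / real (k n)"
        by (rule frac_le) (use h n2 Npos kpos S0 in auto)
      also have "\<dots> = (S (k (Suc n)) / real (k (Suc n))) * (real (k (Suc n)) / real (k n))"
        using kpos[of "Suc n"] by simp
      also have "\<dots> \<le> (m + e) * (\<alpha> + e)"
      proof -
        have "0 \<le> S (k (Suc n)) / real (k (Suc n))" using S0[of "k (Suc n)"] kpos[of "Suc n"] by simp
        moreover have "0 \<le> real (k (Suc n)) / real (k n)" by simp
        ultimately show ?thesis using A2 R1 by (intro mult_mono) (auto simp: abs_less_iff)
      qed
      finally show ?thesis .
    qed
    have low: "(m - e) / (\<alpha> + e) \<le> S N / real N"
    proof (cases "m - e \<le> 0")
      case True
      then have "(m - e) / (\<alpha> + e) \<le> 0" using a e by (simp add: divide_nonpos_pos)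
      also have "0 \<le> S N / real N" using S0 Npos by simp
      finally show ?thesis .
    next
      case False
      have r: "1 / (\<alpha> + e) \<le> real (k n) / real (k (Suc n))"
      proof -
        have "real (k (Suc n)) / real (k n) \<le> \<alpha> + e" using R1 by (simp add: abs_less_iff)
        then have "real (k (Suc n)) \<le> (\<alpha> + e) * real (k n)" using kpos[of n] by (simp add: field_simps)
        then show ?thesis using kpos a e by (simp add: field_simps)
      qed
      have "(m - e) / (\<alpha> + e) = (m - e) * (1 / (\<alpha> + e))" by simp
      also have "\<dots> \<le> (S (k n) / real (k n)) * (real (k n) / real (k (Suc n)))"
        using A1 r False a e by (intro mult_mono) (auto simp: abs_less_iff)
      also have "\<dots> = S (k n) / real (k (Suc n))" using kpos[of n] by simp
      also have "\<dots> \<le> S N / real N"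
      proof -
        have h: "S (k n) \<le> S N" using n2 Smono by (simp add: monoD)
        show ?thesis by (rule frac_le) (use h n1 Npos kpos S0 in auto)
      qed
      finally show ?thesis .
    qed
    show "S N / real N \<le> (m + e) * (\<alpha> + e) \<and> (m - e) / (\<alpha> + e) \<le> S N / real N"
      using up low by simp
  qed
qed

lemma sum_ind_le_real:
  fixes x :: real assumes x: "x \<ge> 0"
  shows "(\<Sum>n<N. if real n + 1 \<le> x then 1 else 0::real) \<le> x"
proof -
  have "(\<Sum>n<N. if real n + 1 \<le> x then 1 else 0::real) = real (card {n\<in>{..<N}. real n + 1 \<le> x})"
    by (simp add: sum.If_cases Int_def)
  also have "card {n\<in>{..<N}. real n + 1 \<le> x} \<le> card {..<nat \<lfloor>x\<rfloor>}"
  proof (rule card_mono)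
    show "{n \<in> {..<N}. real n + 1 \<le> x} \<subseteq> {..<nat \<lfloor>x\<rfloor>}"
    proof
      fix n assume "n \<in> {n \<in> {..<N}. real n + 1 \<le> x}"
      then have "real n + 1 \<le> x" by auto
      then have "int n + 1 \<le> \<lfloor>x\<rfloor>" by (metis le_floor_iff of_int_1 of_int_add of_int_of_nat_eq)
      then show "n \<in> {..<nat \<lfloor>x\<rfloor>}" by auto
    qed
  qed auto
  then have "real (card {n\<in>{..<N}. real n + 1 \<le> x}) \<le> real (nat \<lfloor>x\<rfloor>)" by simp
  also have "\<dots> \<le> x" using x by simp
  finally show ?thesis .
qed

lemma sum_inv_sq_tail_aux:
  assumes "m \<le> I"
  shows "(\<Sum>i\<in>{m..<I}. 1/(real i + 1)^2) \<le> 2/(real m + 1) - 2/(real I + 1)"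
  using assms
proof (induction I rule: dec_induct)
  case base then show ?case by simp
next
  case (step I)
  define a where "a = real I + 1"
  have a: "a \<ge> 1" unfolding a_def by simp
  have e: "2/(real I + 1) - 2/(real (Suc I) + 1) = 2/(a*(a+1))" unfolding a_def by (simp add: field_simps)
  have "a*(a+1) \<le> a * (2*a)" using a by (intro mult_left_mono) auto
  then have "2/(2*a^2) \<le> 2/(a*(a+1))" using a by (intro divide_left_mono) (auto simp: power2_eq_square)
  then have "1/(real I + 1)^2 \<le> 2/(real I + 1) - 2/(real (Suc I) + 1)"
    unfolding e by (simp add: a_def)
  then show ?case using step by simp
qed

lemma sum_inv_sq_tail:
  "(\<Sum>i\<in>{m..<I}. 1/(real i + 1)^2) \<le> 2/(real m + 1)"
proof (cases "m \<le> I")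
  case True
  then show ?thesis using sum_inv_sq_tail_aux[OF True] by (smt (verit) divide_nonneg_nonneg of_nat_0_le_iff)
qed auto

lemma sq_trunc_sum_le:
  fixes x :: real assumes x: "x \<ge> 0"
  shows "(\<Sum>i<I. (if x < real i + 1 then x^2 else 0) / (real i + 1)^2) \<le> 2*x"
proof -
  define m where "m = nat \<lfloor>x\<rfloor>"
  have iff: "x < real i + 1 \<longleftrightarrow> m \<le> i" for i
    unfolding m_def using x by linarith
  have "(\<Sum>i<I. (if x < real i + 1 then x^2 else 0) / (real i + 1)^2)
      = (\<Sum>i\<in>{i\<in>{..<I}. m \<le> i}. x^2 / (real i + 1)^2)"
    by (subst sum.inter_filter) (auto intro!: sum.cong simp: iff)
  also have "{i\<in>{..<I}. m \<le> i} = {m..<I}" by auto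
  also have "(\<Sum>i\<in>{m..<I}. x^2 / (real i + 1)^2) = x^2 * (\<Sum>i\<in>{m..<I}. 1 / (real i + 1)^2)"
    by (simp add: sum_distrib_left)
  also have "\<dots> \<le> x^2 * (2 / (real m + 1))"
    by (intro mult_left_mono sum_inv_sq_tail) auto
  also have "\<dots> \<le> 2 * x"
  proof -
    have "x < real m + 1" using iff[of m] by simp
    then have "x * x \<le> x * (real m + 1)" using x by (intro mult_left_mono) auto
    then show ?thesis by (simp add: field_simps power2_eq_square)
  qed
  finally show ?thesis .
qed

lemma geom_tail_bound:
  fixes \<beta> c :: real
  assumes b: "0 < \<beta>" "\<beta> < 1" and c: "c \<ge> 0"
  shows "(\<Sum>n<N. if \<beta>^n \<le> c then \<beta>^n else 0) \<le> c / (1 - \<beta>)"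
proof (cases "\<exists>n<N. \<beta>^n \<le> c")
  case False
  then have "(\<Sum>n<N. if \<beta>^n \<le> c then \<beta>^n else 0) = 0" by (intro sum.neutral) auto
  then show ?thesis using b c by simp
next
  case True
  define n0 where "n0 = (LEAST n. \<beta>^n \<le> c)"
  have n0: "\<beta>^n0 \<le> c" unfolding n0_def using True by (metis LeastI)
  have le: "\<beta>^n \<le> c \<Longrightarrow> n0 \<le> n" for n unfolding n0_def by (rule Least_le)
  have "(\<Sum>n<N. if \<beta>^n \<le> c then \<beta>^n else 0) \<le> (\<Sum>n\<in>{n0..<N}. \<beta>^n)"
  proof -
    have "(\<Sum>n<N. if \<beta>^n \<le> c then \<beta>^n else 0) = (\<Sum>n\<in>{n\<in>{..<N}. \<beta>^n \<le> c}. \<beta>^n)"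
      by (simp add: sum.If_cases Int_def)
    also have "\<dots> \<le> (\<Sum>n\<in>{n0..<N}. \<beta>^n)"
      by (intro sum_mono2) (use le b in auto)
    finally show ?thesis .
  qed
  also have "(\<Sum>n\<in>{n0..<N}. \<beta>^n) = \<beta>^n0 * (\<Sum>j<N - n0. \<beta>^j)"
  proof (cases "n0 \<le> N")
    case True
    have "(\<Sum>n\<in>{n0..<N}. \<beta>^n) = (\<Sum>j\<in>{0..<N - n0}. \<beta>^(j + n0))"
      using sum.shift_bounds_nat_ivl[of "\<lambda>n. \<beta>^n" 0 n0 "N - n0"] True by simp
    also have "\<dots> = \<beta>^n0 * (\<Sum>j<N - n0. \<beta>^j)"
      by (simp add: power_add sum_distrib_left atLeast0LessThan mult.commute)
    finally show ?thesis .
  qed simp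
  also have "\<dots> \<le> c * (1 / (1 - \<beta>))"
  proof (intro mult_mono n0 c)
    have "(\<Sum>j<N - n0. \<beta>^j) = (1 - \<beta>^(N-n0)) / (1 - \<beta>)"
      using b by (simp add: sum_gp_strict)
    also have "\<dots> \<le> 1 / (1 - \<beta>)" using b by (intro divide_right_mono) auto
    finally show "(\<Sum>j<N - n0. \<beta>^j) \<le> 1 / (1 - \<beta>)" .
  qed (use b in \<open>auto intro: sum_nonneg\<close>)
  finally show ?thesis by simp
qed

lemma cesaro_lim:
  fixes a :: "nat \<Rightarrow> real"
  assumes "a \<longlonglongrightarrow> L"
  shows "(\<lambda>N. (\<Sum>i<N. a i) / real N) \<longlonglongrightarrow> L"
proof (rule LIMSEQ_I)
  fix r :: real assume r: "r > 0"
  obtain N0 where N0: "\<And>i. i \<ge> N0 \<Longrightarrow> norm (a i - L) < r/2"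
    using LIMSEQ_D[OF assms, of "r/2"] r by auto
  define B where "B = (\<Sum>i<N0. \<bar>a i - L\<bar>)"
  have B0: "B \<ge> 0" unfolding B_def by (auto intro: sum_nonneg)
  obtain N1 :: nat where N1: "real N1 > 2 * B / r" using reals_Archimedean2 by blast
  show "\<exists>no. \<forall>N\<ge>no. norm ((\<Sum>i<N. a i) / real N - L) < r"
  proof (intro exI[of _ "max (max N0 N1) 1"] allI impI)
    fix N assume N: "max (max N0 N1) 1 \<le> N"
    then have Npos: "real N > 0" by auto
    have "(\<Sum>i<N. a i) / real N - L = (\<Sum>i<N. a i - L) / real N"
      using Npos by (simp add: sum_subtractf field_simps)
    also have "(\<Sum>i<N. a i - L) = (\<Sum>i<N0. a i - L) + (\<Sum>i\<in>{N0..<N}. a i - L)"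
      using sum.atLeastLessThan_concat[of 0 N0 N "\<lambda>i. a i - L"] N by (simp add: atLeast0LessThan)
    finally have eq: "(\<Sum>i<N. a i) / real N - L = ((\<Sum>i<N0. a i - L) + (\<Sum>i\<in>{N0..<N}. a i - L)) / real N" .
    have b1: "\<bar>\<Sum>i<N0. a i - L\<bar> \<le> B" unfolding B_def by (rule sum_abs)
    have "\<bar>\<Sum>i\<in>{N0..<N}. a i - L\<bar> \<le> (\<Sum>i\<in>{N0..<N}. \<bar>a i - L\<bar>)" by (rule sum_abs)
    also have "\<dots> \<le> (\<Sum>i\<in>{N0..<N}. r/2)" using N0 by (intro sum_mono) (auto simp: less_imp_le)
    also have "\<dots> \<le> real N * (r/2)" using r by simp
    finally have b2: "\<bar>\<Sum>i\<in>{N0..<N}. a i - L\<bar> \<le> real N * (r/2)" .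
    have "B < real N * (r/2)"
    proof -
      have "real N1 \<le> real N" using N by auto
      then have "2 * B / r < real N" using N1 by linarith
      then show ?thesis using r by (simp add: field_simps)
    qed
    then have "\<bar>(\<Sum>i<N0. a i - L) + (\<Sum>i\<in>{N0..<N}. a i - L)\<bar> < real N * r"
      using b1 b2 by linarith
    then show "norm ((\<Sum>i<N. a i) / real N - L) < r"
      unfolding eq using Npos by (simp add: field_simps abs_divide)
  qed
qed

locale iid_nn = prob_space +
  fixes X :: "nat \<Rightarrow> 'a \<Rightarrow> real"
  assumes rv[measurable]: "\<And>i. X i \<in> borel_measurable M"
    and indep: "indep_vars (\<lambda>_. borel) X UNIV"
    and ident: "\<And>i. distr M borel (X i) = distr M borel (X 0)"
    and nn: "\<And>i \<omega>. 0 \<le> X i \<omega>"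
    and int0: "integrable M (X 0)"
begin

lemma ident_integral:
  fixes h :: "real \<Rightarrow> real"
  assumes [measurable]: "h \<in> borel_measurable borel"
  shows "(\<integral>\<omega>. h (X i \<omega>) \<partial>M) = (\<integral>\<omega>. h (X 0 \<omega>) \<partial>M)"
proof -
  have "(\<integral>\<omega>. h (X i \<omega>) \<partial>M) = (\<integral>x. h x \<partial>distr M borel (X i))" by (rule integral_distr[OF rv assms, symmetric])
  also have "\<dots> = (\<integral>x. h x \<partial>distr M borel (X 0))" by (simp only: ident[of i])
  also have "\<dots> = (\<integral>\<omega>. h (X 0 \<omega>) \<partial>M)" by (rule integral_distr[OF rv assms])
  finally show ?thesis .
qed

lemma ident_prob:
  assumes [measurable]: "A \<in> sets borel"
  shows "prob {\<omega>\<in>space M. X i \<omega> \<in> A} = prob {\<omega>\<in>space M. X 0 \<omega> \<in> A}"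
proof -
  have e: "X j -` A \<inter> space M = {\<omega>\<in>space M. X j \<omega> \<in> A}" for j by auto
  have "prob {\<omega>\<in>space M. X i \<omega> \<in> A} = measure (distr M borel (X i)) A"
    using measure_distr[of "X i" M borel A] e by simp
  also have "\<dots> = measure (distr M borel (X 0)) A" by (simp only: ident[of i])
  also have "\<dots> = prob {\<omega>\<in>space M. X 0 \<omega> \<in> A}"
    using measure_distr[of "X 0" M borel A] e by simp
  finally show ?thesis .
qed

definition "tr i x = (if x < real i + 1 then x else (0::real))"

lemma tr_meas[measurable]: "tr i \<in> borel_measurable borel"
  unfolding tr_def by measurable

lemma tr_bound: "0 \<le> x \<Longrightarrow> 0 \<le> tr i x \<and> tr i x \<le> x \<and> tr i x \<le> real i + 1"
  unfolding tr_def by auto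

definition "T i \<omega> = tr i (X i \<omega>)"

lemma T_meas[measurable]: "T i \<in> borel_measurable M"
  unfolding T_def by measurable

lemma T_int:
  fixes h :: "real \<Rightarrow> real" and B :: real
  assumes [measurable]: "h \<in> borel_measurable borel"
  and hb: "\<And>x. 0 \<le> x \<Longrightarrow> x \<le> real i + 1 \<Longrightarrow> \<bar>h x\<bar> \<le> B"
  shows "integrable M (\<lambda>\<omega>. h (T i \<omega>))"
proof (rule integrable_const_bound[where B=B])
  show "AE x in M. norm (h (T i x)) \<le> B"
  proof (rule AE_I2)
    fix x
    have "0 \<le> T i x" "T i x \<le> real i + 1" using tr_bound[OF nn[of i x]] by (simp_all add: T_def)
    then have "\<bar>h (T i x)\<bar> \<le> B" by (rule hb)
    then show "norm (h (T i x)) \<le> B" by (simp only: real_norm_def)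
  qed
qed measurable

lemma step_a: "AE \<omega> in M. eventually (\<lambda>n. X n \<omega> = T n \<omega>) sequentially"
proof -
  define A where "A n = {\<omega>\<in>space M. X n \<omega> \<in> {real n + 1..}}" for n
  define B where "B n = {\<omega>\<in>space M. X 0 \<omega> \<in> {real n + 1..}}" for n
  have [measurable]: "A n \<in> sets M" for n unfolding A_def by measurable
  have Bm[measurable]: "B n \<in> sets M" for n unfolding B_def by measurable
  have Bint: "integrable M (indicator (B n) :: 'a \<Rightarrow> real)" for n
    by (rule integrable_real_indicator[OF Bm]) (simp add: less_top[symmetric])
  have pA: "measure M (A n) = prob (B n)" for n
  proof -
    have "prob {\<omega>\<in>space M. X n \<omega> \<in> {real n + 1..}} = prob {\<omega>\<in>space M. X 0 \<omega> \<in> {real n + 1..}}"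
      by (rule ident_prob[where i=n and A="{real n + 1..}", OF atLeast_borel])
    then show ?thesis unfolding A_def B_def .
  qed
  have pB: "prob (B n) = expectation (indicator (B n))" for n
  proof -
    have e: "B n \<inter> space M = B n" unfolding B_def by blast
    have "expectation (indicator (B n)) = measure M (B n \<inter> space M)" by (rule Bochner_Integration.integral_indicator)
    then show ?thesis unfolding e by simp
  qed
  have sum: "summable (\<lambda>n. measure M (A n))"
  proof (rule summableI_nonneg_bounded[where x="expectation (X 0)"])
    fix N
    have "(\<Sum>n<N. measure M (A n)) = (\<Sum>n<N. expectation (indicator (B n)))"
      by (simp only: pA pB)
    also have "\<dots> = expectation (\<lambda>\<omega>. \<Sum>n<N. indicator (B n) \<omega>)"
      by (rule Bochner_Integration.integral_sum[symmetric]) (rule Bint)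
    also have "\<dots> \<le> expectation (X 0)"
    proof (rule integral_mono)
      show "integrable M (\<lambda>\<omega>. \<Sum>n<N. indicator (B n) \<omega> :: real)"
        by (rule Bochner_Integration.integrable_sum) (rule Bint)
      show "integrable M (X 0)" by (rule int0)
      fix \<omega> assume om: "\<omega> \<in> space M"
      have "(\<Sum>n<N. indicator (B n) \<omega> :: real) = (\<Sum>n<N. if real n + 1 \<le> X 0 \<omega> then 1 else 0)"
      proof (rule sum.cong[OF refl])
        fix n show "indicator (B n) \<omega> = (if real n + 1 \<le> X 0 \<omega> then 1 else (0::real))"
          using om unfolding B_def indicator_def by simp
      qed
      also have "\<dots> \<le> X 0 \<omega>" by (rule sum_ind_le_real[OF nn])
      finally show "(\<Sum>n<N. indicator (B n) \<omega> :: real) \<le> X 0 \<omega>" .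
    qed
    finally show "(\<Sum>n<N. measure M (A n)) \<le> expectation (X 0)" .
  qed simp
  have "AE \<omega> in M. eventually (\<lambda>n. \<omega> \<in> space M - A n) sequentially"
  proof (rule borel_cantelli_AE1)
    show "\<And>n. emeasure M (A n) < \<infinity>" by (simp add: less_top[symmetric])
  qed (simp_all add: sum)
  moreover have "AE \<omega> in M. eventually (\<lambda>n. \<omega> \<in> space M - A n) sequentially \<longrightarrow> eventually (\<lambda>n. X n \<omega> = T n \<omega>) sequentially"
  proof (rule AE_I2, rule impI)
    fix \<omega> assume ev: "eventually (\<lambda>n. \<omega> \<in> space M - A n) sequentially"
    show "eventually (\<lambda>n. X n \<omega> = T n \<omega>) sequentially"
    proof (rule eventually_mono[OF ev])
      fix n assume "\<omega> \<in> space M - A n"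
      then have "X n \<omega> < real n + 1" unfolding A_def by auto
      then show "X n \<omega> = T n \<omega>" unfolding T_def tr_def by simp
    qed
  qed
  ultimately show ?thesis by (rule AE_mp)
qed

definition "c i = expectation (T i)"

lemma c_eq: "c i = expectation (\<lambda>\<omega>. tr i (X 0 \<omega>))"
  unfolding c_def T_def by (rule ident_integral[where i=i and h="tr i", OF tr_meas])

lemma c_lim: "c \<longlonglongrightarrow> expectation (X 0)"
  unfolding c_eq
proof (rule integral_dominated_convergence[where w="X 0"])
  show "AE x in M. (\<lambda>i. tr i (X 0 x)) \<longlonglongrightarrow> X 0 x"
  proof (rule AE_I2)
    fix x
    obtain n0 :: nat where "X 0 x < real n0" using reals_Archimedean2 by blast
    then have "\<forall>i\<ge>n0. tr i (X 0 x) = X 0 x" unfolding tr_def by auto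
    then show "(\<lambda>i. tr i (X 0 x)) \<longlonglongrightarrow> X 0 x"
      by (intro tendsto_eventually) (auto simp: eventually_sequentially)
  qed
  show "\<And>i. AE x in M. norm (tr i (X 0 x)) \<le> X 0 x"
    using tr_bound[OF nn] by auto
  show "X 0 \<in> borel_measurable M" by measurable
  show "\<And>i. (\<lambda>x. tr i (X 0 x)) \<in> borel_measurable M" by measurable
  show "integrable M (X 0)" by (rule int0)
qed

lemma cesaro_c: "(\<lambda>N. (\<Sum>i<N. c i) / real N) \<longlonglongrightarrow> expectation (X 0)"
  by (rule cesaro_lim[OF c_lim])

end

context iid_nn begin

definition "v i = expectation (\<lambda>\<omega>. (T i \<omega>)^2)"

lemma v_eq: "v i = expectation (\<lambda>\<omega>. (tr i (X 0 \<omega>))^2)"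
proof -
  have m: "(\<lambda>x. (tr i x)^2) \<in> borel_measurable borel" by measurable
  show ?thesis unfolding v_def T_def by (rule ident_integral[where i=i and h="\<lambda>x. (tr i x)^2", OF m])
qed

lemma T_abs: "\<bar>T i \<omega>\<bar> \<le> real i + 1"
  using tr_bound[OF nn[of i \<omega>], of i] unfolding T_def by simp

lemma T_int1: "integrable M (T i)"
  using T_int[where h="\<lambda>x. x" and B="real i + 1" and i=i] by simp

lemma v_nonneg: "0 \<le> v i"
  unfolding v_def by (rule integral_nonneg_AE) simp

definition "C i \<omega> = T i \<omega> - c i"

lemma C_meas[measurable]: "C i \<in> borel_measurable M"
  unfolding C_def by measurable

lemma C_abs: "\<bar>C i \<omega>\<bar> \<le> real i + 1 + \<bar>c i\<bar>"
  using T_abs[of i \<omega>] unfolding C_def by arith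

lemma C_int: "integrable M (C i)"
  by (rule integrable_const_bound[where B="real i + 1 + \<bar>c i\<bar>"]) (auto simp: C_abs)

lemma C_int2: "integrable M (\<lambda>\<omega>. C i \<omega> * C j \<omega>)"
proof (rule integrable_const_bound[where B="(real i + 1 + \<bar>c i\<bar>) * (real j + 1 + \<bar>c j\<bar>)"])
  show "AE x in M. norm (C i x * C j x) \<le> (real i + 1 + \<bar>c i\<bar>) * (real j + 1 + \<bar>c j\<bar>)"
    by (rule AE_I2) (auto simp: abs_mult intro!: mult_mono C_abs)
qed measurable

lemma C_mean: "expectation (C i) = 0"
proof -
  have "expectation (C i) = expectation (T i) - expectation (\<lambda>\<omega>. c i)"
    unfolding C_def by (rule Bochner_Integration.integral_diff[OF T_int1]) simp
  then show ?thesis by (simp add: c_def prob_space)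
qed

lemma C_indep: "indep_vars (\<lambda>_. borel) C UNIV"
proof -
  have "indep_vars (\<lambda>_. borel) (\<lambda>i \<omega>. (\<lambda>x. tr i x - c i) (X i \<omega>)) UNIV"
    by (rule indep_vars_compose2[OF indep]) measurable
  moreover have "(\<lambda>i \<omega>. (\<lambda>x. tr i x - c i) (X i \<omega>)) = C"
    by (auto simp: C_def T_def fun_eq_iff)
  ultimately show ?thesis by simp
qed

lemma C_prod0:
  assumes ij: "i \<noteq> j"
  shows "expectation (\<lambda>\<omega>. C i \<omega> * C j \<omega>) = 0"
proof -
  have ind: "indep_vars (\<lambda>_. borel) C {i,j}" by (rule indep_vars_subset[OF C_indep]) auto
  have "expectation (\<lambda>\<omega>. \<Prod>k\<in>{i,j}. C k \<omega>) = (\<Prod>k\<in>{i,j}. expectation (C k))"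
    by (rule indep_vars_lebesgue_integral) (auto simp: ind C_int)
  then show ?thesis using ij by (simp add: C_mean)
qed

lemma C_sq: "expectation (\<lambda>\<omega>. (C i \<omega>)^2) \<le> v i"
proof -
  have i2: "integrable M (\<lambda>\<omega>. (T i \<omega>)^2)"
    using T_int[where h="\<lambda>x. x^2" and B="(real i + 1)^2" and i=i]
    by (simp add: abs_le_square_iff)
  have "expectation (\<lambda>\<omega>. (C i \<omega>)^2) = expectation (\<lambda>\<omega>. (T i \<omega>)^2) - (expectation (T i))^2"
    unfolding C_def c_def by (rule variance_eq[OF T_int1 i2])
  then show ?thesis unfolding v_def by simp
qed

definition "U N \<omega> = (\<Sum>i<N. C i \<omega>)"

lemma U_meas[measurable]: "U N \<in> borel_measurable M"
  unfolding U_def by measurable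

lemma U_mean: "expectation (U N) = 0"
proof -
  have "expectation (U N) = (\<Sum>i<N. expectation (C i))"
    unfolding U_def[abs_def] by (rule Bochner_Integration.integral_sum) (rule C_int)
  then show ?thesis by (simp add: C_mean)
qed

lemma U_sq_eq: "(\<lambda>\<omega>. (U N \<omega>)^2) = (\<lambda>\<omega>. \<Sum>i<N. \<Sum>j<N. C i \<omega> * C j \<omega>)"
  by (auto simp: U_def power2_eq_square sum_product)

lemma U_int2: "integrable M (\<lambda>\<omega>. (U N \<omega>)^2)"
  unfolding U_sq_eq
  by (intro Bochner_Integration.integrable_sum C_int2)

lemma U_sq: "expectation (\<lambda>\<omega>. (U N \<omega>)^2) \<le> (\<Sum>i<N. v i)"
proof -
  have "expectation (\<lambda>\<omega>. (U N \<omega>)^2) = (\<Sum>i<N. expectation (\<lambda>\<omega>. \<Sum>j<N. C i \<omega> * C j \<omega>))"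
    unfolding U_sq_eq
    by (rule Bochner_Integration.integral_sum) (intro Bochner_Integration.integrable_sum C_int2)
  also have "\<dots> = (\<Sum>i<N. \<Sum>j<N. expectation (\<lambda>\<omega>. C i \<omega> * C j \<omega>))"
    by (intro sum.cong refl Bochner_Integration.integral_sum C_int2)
  also have "\<dots> = (\<Sum>i<N. expectation (\<lambda>\<omega>. (C i \<omega>)^2))"
  proof (rule sum.cong[OF refl])
    fix i assume i: "i \<in> {..<N}"
    have "(\<Sum>j<N. expectation (\<lambda>\<omega>. C i \<omega> * C j \<omega>)) = (\<Sum>j<N. if i = j then expectation (\<lambda>\<omega>. (C i \<omega>)^2) else 0)"
      by (rule sum.cong) (auto simp: C_prod0 power2_eq_square)
    also have "\<dots> = expectation (\<lambda>\<omega>. (C i \<omega>)^2)" using i by simp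
    finally show "(\<Sum>j<N. expectation (\<lambda>\<omega>. C i \<omega> * C j \<omega>)) = expectation (\<lambda>\<omega>. (C i \<omega>)^2)" .
  qed
  also have "\<dots> \<le> (\<Sum>i<N. v i)" by (intro sum_mono C_sq)
  finally show ?thesis .
qed

lemma cheb:
  assumes a: "a > 0"
  shows "prob {\<omega>\<in>space M. a \<le> \<bar>U N \<omega>\<bar>} \<le> (\<Sum>i<N. v i) / a^2"
proof -
  have "prob {\<omega>\<in>space M. \<bar>U N \<omega> - expectation (U N)\<bar> \<ge> a} \<le> variance (U N) / a^2"
    by (rule Chebyshev_inequality[OF U_meas U_int2 a])
  then have "prob {\<omega>\<in>space M. a \<le> \<bar>U N \<omega>\<bar>} \<le> expectation (\<lambda>\<omega>. (U N \<omega>)^2) / a^2"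
    by (simp add: U_mean)
  also have "\<dots> \<le> (\<Sum>i<N. v i) / a^2"
    using a by (intro divide_right_mono U_sq) auto
  finally show ?thesis .
qed

lemma v_sum_bound: "(\<Sum>i<K. v i / (real i + 1)^2) \<le> 2 * expectation (X 0)"
proof -
  have int: "integrable M (\<lambda>\<omega>. (tr i (X 0 \<omega>))^2 / (real i + 1)^2)" for i
  proof (rule integrable_const_bound[where B="1"])
    show "AE x in M. norm ((tr i (X 0 x))^2 / (real i + 1)^2) \<le> 1"
    proof (rule AE_I2)
      fix x
      have b: "0 \<le> tr i (X 0 x)" "tr i (X 0 x) \<le> real i + 1" using tr_bound[OF nn[of 0 x], of i] by auto
      then have "(tr i (X 0 x))^2 \<le> (real i + 1)^2" by (intro power_mono) auto
      then show "norm ((tr i (X 0 x))^2 / (real i + 1)^2) \<le> 1" by simp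
    qed
  qed measurable
  have "(\<Sum>i<K. v i / (real i + 1)^2) = (\<Sum>i<K. expectation (\<lambda>\<omega>. (tr i (X 0 \<omega>))^2 / (real i + 1)^2))"
    by (simp add: v_eq)
  also have "\<dots> = expectation (\<lambda>\<omega>. \<Sum>i<K. (tr i (X 0 \<omega>))^2 / (real i + 1)^2)"
    by (rule Bochner_Integration.integral_sum[symmetric]) (rule int)
  also have "\<dots> \<le> expectation (\<lambda>\<omega>. 2 * X 0 \<omega>)"
  proof (rule integral_mono)
    show "integrable M (\<lambda>\<omega>. \<Sum>i<K. (tr i (X 0 \<omega>))^2 / (real i + 1)^2)"
      by (rule Bochner_Integration.integrable_sum) (rule int)
    show "integrable M (\<lambda>\<omega>. 2 * X 0 \<omega>)" using int0 by simp
    fix \<omega>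
    have "(\<Sum>i<K. (tr i (X 0 \<omega>))^2 / (real i + 1)^2) = (\<Sum>i<K. (if X 0 \<omega> < real i + 1 then (X 0 \<omega>)^2 else 0) / (real i + 1)^2)"
      by (rule sum.cong) (auto simp: tr_def)
    also have "\<dots> \<le> 2 * X 0 \<omega>" by (rule sq_trunc_sum_le[OF nn])
    finally show "(\<Sum>i<K. (tr i (X 0 \<omega>))^2 / (real i + 1)^2) \<le> 2 * X 0 \<omega>" .
  qed
  also have "\<dots> = 2 * expectation (X 0)" by simp
  finally show ?thesis .
qed

end

lemma inner_bound:
  assumes a1: "\<alpha> > 1"
  shows "(\<Sum>n\<in>{n\<in>{..<N'}. i < kk \<alpha> n}. 1/(real (kk \<alpha> n))^2) \<le> (4/(1 - inverse (\<alpha>^2))) / (real i + 1)^2"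
proof -
  define \<beta> where "\<beta> = inverse (\<alpha>^2)"
  have a2: "1 < \<alpha>^2" using a1 by (simp add: one_less_power)
  have b: "0 < \<beta>" "\<beta> < 1" using a1 a2 unfolding \<beta>_def by (auto simp: inverse_less_1_iff)
  have bp: "\<beta>^n = 1/(\<alpha>^n)^2" for n
  proof -
    have "(\<alpha>^2)^n = (\<alpha>^n)^2" by (simp add: power_mult[symmetric] mult.commute)
    then show ?thesis unfolding \<beta>_def by (simp add: power_inverse divide_inverse)
  qed
  have c0: "0 \<le> 1/(real i + 1)^2" by simp
  have "(\<Sum>n\<in>{n\<in>{..<N'}. i < kk \<alpha> n}. 1/(real (kk \<alpha> n))^2) = (\<Sum>n<N'. if i < kk \<alpha> n then 1/(real (kk \<alpha> n))^2 else 0)"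
    by (rule sum.inter_filter) simp
  also have "\<dots> \<le> (\<Sum>n<N'. 4 * (if \<beta>^n \<le> 1/(real i + 1)^2 then \<beta>^n else 0))"
  proof (rule sum_mono)
    fix n
    show "(if i < kk \<alpha> n then 1/(real (kk \<alpha> n))^2 else 0) \<le> 4 * (if \<beta>^n \<le> 1/(real i + 1)^2 then \<beta>^n else 0)"
    proof (cases "i < kk \<alpha> n")
      case True
      have k1: "real i + 1 \<le> real (kk \<alpha> n)" using True by linarith
      have k2: "real (kk \<alpha> n) \<le> \<alpha>^n" by (rule kk_le[OF a1])
      have k3: "\<alpha>^n/2 \<le> real (kk \<alpha> n)" by (rule kk_half[OF a1])
      have pos: "0 < \<alpha>^n" using a1 by simp
      have "(real i + 1)^2 \<le> (\<alpha>^n)^2" using k1 k2 by (intro power_mono) auto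
      moreover have "0 < (\<alpha>^n)^2 * (real i + 1)^2" by (rule mult_pos_pos[OF zero_less_power[OF pos]]) simp
      ultimately have le1: "\<beta>^n \<le> 1/(real i + 1)^2" unfolding bp by (intro divide_left_mono) auto
      have "(\<alpha>^n/2)^2 \<le> (real (kk \<alpha> n))^2" using k3 pos by (intro power_mono) auto
      moreover have "0 < (real (kk \<alpha> n))^2 * (\<alpha>^n/2)^2"
        using kk_ge1[OF a1, of n] pos by (intro mult_pos_pos zero_less_power) auto
      ultimately have "1/(real (kk \<alpha> n))^2 \<le> 1/(\<alpha>^n/2)^2" by (intro divide_left_mono) auto
      also have "\<dots> = 4 * \<beta>^n" unfolding bp using pos by (simp add: field_simps power2_eq_square)
      finally show ?thesis using True le1 by simp
    next
      case False then show ?thesis using b by simp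
    qed
  qed
  also have "\<dots> = 4 * (\<Sum>n<N'. if \<beta>^n \<le> 1/(real i + 1)^2 then \<beta>^n else 0)" by (simp add: sum_distrib_left)
  also have "\<dots> \<le> 4 * ((1/(real i + 1)^2) / (1 - \<beta>))" by (intro mult_left_mono geom_tail_bound b c0) auto
  also have "\<dots> = (4/(1 - \<beta>)) / (real i + 1)^2" by simp
  finally show ?thesis unfolding \<beta>_def .
qed

lemma interp_final:
  fixes S :: "nat \<Rightarrow> real"
  assumes Smono: "mono S" and S0: "\<And>N. 0 \<le> S N" and m0: "0 \<le> m"
    and lim: "\<And>j::nat. (\<lambda>n. S (kk (1 + 1/(real j+1)) n) / real (kk (1 + 1/(real j+1)) n)) \<longlonglongrightarrow> m"
  shows "(\<lambda>N. S N / real N) \<longlonglongrightarrow> m"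
proof -
  have bounds: "eventually (\<lambda>N. S N / real N \<le> (m + e) * (1 + t) \<and> (m - e) / (1 + t) \<le> S N / real N) sequentially"
    if e: "e > 0" "e \<le> t/2" and t: "t > 0" for e t
  proof -
    obtain j :: nat where j: "inverse (real (Suc j)) < t/2" using reals_Archimedean t by (metis half_gt_zero)
    define \<alpha> where "\<alpha> = 1 + 1/(real j+1)"
    have a1: "\<alpha> > 1" unfolding \<alpha>_def by simp
    have j': "1/(real j + 1) < t/2" using j by (simp add: inverse_eq_divide add.commute)
    have ae: "\<alpha> + e \<le> 1 + t" using j' e unfolding \<alpha>_def by linarith
    have ev: "eventually (\<lambda>N. S N / real N \<le> (m + e) * (\<alpha> + e) \<and> (m - e) / (\<alpha> + e) \<le> S N / real N) sequentially"
      by (rule interp_bounds[OF Smono S0 kk_mono[OF a1] kk_ge1[OF a1] kk_lim[OF a1] kk_ratio[OF a1] lim[of j, folded \<alpha>_def] e(1)]) (use a1 in simp)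
    show ?thesis
    proof (rule eventually_mono[OF ev], safe)
      fix N assume h1: "S N / real N \<le> (m + e) * (\<alpha> + e)" and h2: "(m - e) / (\<alpha> + e) \<le> S N / real N"
      have "(m + e) * (\<alpha> + e) \<le> (m + e) * (1 + t)" using ae m0 e by (intro mult_left_mono) auto
      then show "S N / real N \<le> (m + e) * (1 + t)" using h1 by linarith
      have SN0: "0 \<le> S N / real N" using S0[of N] by simp
      show "(m - e) / (1 + t) \<le> S N / real N"
      proof (cases "m - e \<le> 0")
        case True
        then have "(m - e) / (1 + t) \<le> 0" using t by (simp add: divide_nonpos_pos)
        then show ?thesis using SN0 by linarith
      next
        case False
        have "(m - e) / (1 + t) \<le> (m - e) / (\<alpha> + e)"
          using False ae a1 e by (intro divide_left_mono) auto
        then show ?thesis using h2 by linarith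
      qed
    qed
  qed
  show ?thesis
  proof (rule order_tendstoI)
    fix b assume b: "m < b"
    define \<delta> where "\<delta> = b - m"
    have d: "\<delta> > 0" using b unfolding \<delta>_def by simp
    define t where "t = \<delta> / (4 * (m + 1))"
    have t: "t > 0" using d m0 unfolding t_def by simp
    define e where "e = min (min (\<delta>/4) (t/2)) 1"
    have e: "e > 0" "e \<le> t/2" "e \<le> \<delta>/4" "e \<le> 1" using d t unfolding e_def by auto
    have h1: "(m + e) * (1 + t) = m + e + (m + e) * t" by (simp add: algebra_simps)
    have h2: "(m + e) * t \<le> (m + 1) * t" using e t by (intro mult_right_mono) auto
    have h3: "(m + 1) * t = \<delta> / 4" unfolding t_def using m0 by (simp add: field_simps)
    have "(m + e) * (1 + t) < b" using h1 h2 h3 e(3) d \<delta>_def by linarith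
    then show "eventually (\<lambda>N. S N / real N < b) sequentially"
      using bounds[OF e(1,2) t] by (auto elim: eventually_mono)
  next
    fix a assume a: "a < m"
    show "eventually (\<lambda>N. a < S N / real N) sequentially"
    proof (cases "a < 0")
      case True
      have "0 \<le> S N / real N" for N using S0[of N] by simp
      then show ?thesis using True by (intro always_eventually) (auto intro: less_le_trans)
    next
      case False
      define \<delta> where "\<delta> = m - a"
      have d: "\<delta> > 0" using a unfolding \<delta>_def by simp
      define t where "t = \<delta> / (4 * (m + 1))"
      have t: "t > 0" using d m0 unfolding t_def by simp
      define e where "e = min (min (\<delta>/4) (t/2)) 1"
      have e: "e > 0" "e \<le> t/2" "e \<le> \<delta>/4" "e \<le> 1" using d t unfolding e_def by auto
      have me: "0 \<le> m - e" using e False \<delta>_def by linarith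
      have "(m - e) * (1 - t) \<le> (m - e) / (1 + t)"
      proof -
        have "(m - e) * (1 - t) * (1 + t) = (m - e) * (1 - t^2)" by (simp add: algebra_simps power2_eq_square)
        also have "\<dots> \<le> (m - e) * 1" using me by (intro mult_left_mono) auto
        finally show ?thesis using t by (simp add: pos_le_divide_eq)
      qed
      moreover have "(m - e) * (1 - t) = m - e - (m - e) * t" by (simp add: algebra_simps)
      moreover have "(m - e) * t \<le> (m + 1) * t" using e t by (intro mult_right_mono) auto
      moreover have "(m + 1) * t = \<delta> / 4" unfolding t_def using m0 by (simp add: field_simps)
      ultimately have "a < (m - e) / (1 + t)" using e d \<delta>_def by linarith
      then show ?thesis
        using bounds[OF e(1,2) t] by (auto elim: eventually_mono)
    qed
  qed
qed

context iid_nn begin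

lemma partial_bound:
  assumes a1: "\<alpha> > 1"
  shows "(\<Sum>n<N'. (\<Sum>i<kk \<alpha> n. v i) / (real (kk \<alpha> n))^2) \<le> (4/(1 - inverse (\<alpha>^2))) * (2 * expectation (X 0))"
proof -
  define K where "K = kk \<alpha> N'"
  define Ca where "Ca = 4/(1 - inverse (\<alpha>^2))"
  have a2: "1 < \<alpha>^2" using a1 by (simp add: one_less_power)
  have "inverse (\<alpha>^2) < 1" using a2 by (simp add: inverse_less_1_iff)
  then have C0: "0 \<le> Ca" unfolding Ca_def by simp
  have kK: "n < N' \<Longrightarrow> kk \<alpha> n \<le> K" for n using monoD[OF kk_mono[OF a1], of n N'] unfolding K_def by simp
  have "(\<Sum>n<N'. (\<Sum>i<kk \<alpha> n. v i) / (real (kk \<alpha> n))^2) = (\<Sum>n<N'. \<Sum>i\<in>{i\<in>{..<K}. i < kk \<alpha> n}. v i / (real (kk \<alpha> n))^2)"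
  proof (rule sum.cong[OF refl])
    fix n assume "n \<in> {..<N'}"
    then have "{i\<in>{..<K}. i < kk \<alpha> n} = {..<kk \<alpha> n}" using kK by fastforce
    then show "(\<Sum>i<kk \<alpha> n. v i) / (real (kk \<alpha> n))^2 = (\<Sum>i\<in>{i\<in>{..<K}. i < kk \<alpha> n}. v i / (real (kk \<alpha> n))^2)"
      by (simp add: sum_divide_distrib)
  qed
  also have "\<dots> = (\<Sum>i<K. \<Sum>n\<in>{n\<in>{..<N'}. i < kk \<alpha> n}. v i / (real (kk \<alpha> n))^2)"
    by (rule sum.swap_restrict) auto
  also have "\<dots> = (\<Sum>i<K. v i * (\<Sum>n\<in>{n\<in>{..<N'}. i < kk \<alpha> n}. 1 / (real (kk \<alpha> n))^2))"
    by (simp add: sum_distrib_left)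
  also have "\<dots> \<le> (\<Sum>i<K. v i * (Ca / (real i + 1)^2))"
  proof (rule sum_mono)
    fix i show "v i * (\<Sum>n\<in>{n\<in>{..<N'}. i < kk \<alpha> n}. 1 / (real (kk \<alpha> n))^2) \<le> v i * (Ca / (real i + 1)^2)"
      unfolding Ca_def by (intro mult_left_mono v_nonneg inner_bound[OF a1])
  qed
  also have "\<dots> = Ca * (\<Sum>i<K. v i / (real i + 1)^2)" by (auto simp: sum_distrib_left mult.commute intro!: sum.cong)
  also have "\<dots> \<le> Ca * (2 * expectation (X 0))" by (intro mult_left_mono v_sum_bound C0)
  finally show ?thesis unfolding Ca_def .
qed

lemma step_b:
  assumes a1: "\<alpha> > 1" and e: "\<epsilon> > 0"
  shows "AE \<omega> in M. eventually (\<lambda>n. \<bar>U (kk \<alpha> n) \<omega>\<bar> < \<epsilon> * real (kk \<alpha> n)) sequentially"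
proof -
  define A where "A n = {\<omega>\<in>space M. \<epsilon> * real (kk \<alpha> n) \<le> \<bar>U (kk \<alpha> n) \<omega>\<bar>}" for n
  have [measurable]: "A n \<in> sets M" for n unfolding A_def by measurable
  define g where "g n = (\<Sum>i<kk \<alpha> n. v i) / (real (kk \<alpha> n))^2" for n
  have g0: "0 \<le> g n" for n unfolding g_def by (intro divide_nonneg_nonneg sum_nonneg v_nonneg) auto
  have gs: "summable g"
  proof (rule summableI_nonneg_bounded[where x="(4/(1 - inverse (\<alpha>^2))) * (2 * expectation (X 0))"])
    show "0 \<le> g n" for n by (rule g0)
    show "sum g {..<N} \<le> (4/(1 - inverse (\<alpha>^2))) * (2 * expectation (X 0))" for N
      unfolding g_def by (rule partial_bound[OF a1])
  qed
  have "summable (\<lambda>n. measure M (A n))"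
  proof (rule summable_comparison_test[OF _ summable_mult[OF gs]])
    show "\<exists>N. \<forall>n\<ge>N. norm (measure M (A n)) \<le> 1/\<epsilon>^2 * g n"
    proof (intro exI allI impI)
      fix n :: nat
      have kpos: "0 < real (kk \<alpha> n)" using kk_ge1[OF a1, of n] by simp
      have "measure M (A n) \<le> (\<Sum>i<kk \<alpha> n. v i) / (\<epsilon> * real (kk \<alpha> n))^2"
        unfolding A_def by (rule cheb) (use e kpos in simp)
      also have "\<dots> = 1/\<epsilon>^2 * g n" unfolding g_def by (simp add: power_mult_distrib)
      finally show "norm (measure M (A n)) \<le> 1/\<epsilon>^2 * g n" by simp
    qed
  qed
  then have "AE \<omega> in M. eventually (\<lambda>n. \<omega> \<in> space M - A n) sequentially"
    by (intro borel_cantelli_AE1) (auto simp: less_top[symmetric])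
  moreover have "AE \<omega> in M. eventually (\<lambda>n. \<omega> \<in> space M - A n) sequentially \<longrightarrow> eventually (\<lambda>n. \<bar>U (kk \<alpha> n) \<omega>\<bar> < \<epsilon> * real (kk \<alpha> n)) sequentially"
  proof (rule AE_I2, rule impI)
    fix \<omega> assume \<omega>: "\<omega> \<in> space M" and ev: "eventually (\<lambda>n. \<omega> \<in> space M - A n) sequentially"
    show "eventually (\<lambda>n. \<bar>U (kk \<alpha> n) \<omega>\<bar> < \<epsilon> * real (kk \<alpha> n)) sequentially"
    proof (rule eventually_mono[OF ev])
      fix n assume "\<omega> \<in> space M - A n"
      then show "\<bar>U (kk \<alpha> n) \<omega>\<bar> < \<epsilon> * real (kk \<alpha> n)" unfolding A_def by auto
    qed
  qed
  ultimately show ?thesis by (rule AE_mp)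
qed

end

context iid_nn begin

lemma U_T: "U N \<omega> = (\<Sum>i<N. T i \<omega>) - (\<Sum>i<N. c i)"
  unfolding U_def C_def by (simp add: sum_subtractf)

lemma step_d:
  assumes a1: "\<alpha> > 1"
  shows "AE \<omega> in M. (\<lambda>n. (\<Sum>i<kk \<alpha> n. X i \<omega>) / real (kk \<alpha> n)) \<longlonglongrightarrow> expectation (X 0)"
proof -
  have ae1: "AE \<omega> in M. \<forall>j::nat. eventually (\<lambda>n. \<bar>U (kk \<alpha> n) \<omega>\<bar> < (1/(real j + 1)) * real (kk \<alpha> n)) sequentially"
    by (subst AE_all_countable) (intro allI step_b[OF a1], simp)
  have kreal: "filterlim (\<lambda>n. real (kk \<alpha> n)) at_top sequentially"
    by (rule filterlim_compose[OF filterlim_real_sequentially kk_lim[OF a1]])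
  have kpos: "0 < real (kk \<alpha> n)" for n using kk_ge1[OF a1, of n] by simp
  have cl: "(\<lambda>n. (\<Sum>i<kk \<alpha> n. c i) / real (kk \<alpha> n)) \<longlonglongrightarrow> expectation (X 0)"
    by (rule filterlim_compose[OF cesaro_c kk_lim[OF a1]])
  show ?thesis
  using ae1 step_a
  proof eventually_elim
    case (elim \<omega>)
    have Ul: "(\<lambda>n. U (kk \<alpha> n) \<omega> / real (kk \<alpha> n)) \<longlonglongrightarrow> 0"
    proof (rule LIMSEQ_I)
      fix r :: real assume r: "0 < r"
      obtain j :: nat where j: "inverse (real (Suc j)) < r" using reals_Archimedean r by blast
      have "eventually (\<lambda>n. \<bar>U (kk \<alpha> n) \<omega>\<bar> < (1/(real j + 1)) * real (kk \<alpha> n)) sequentially"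
        using elim(1) by blast
      then obtain n0 where n0: "\<And>n. n \<ge> n0 \<Longrightarrow> \<bar>U (kk \<alpha> n) \<omega>\<bar> < (1/(real j + 1)) * real (kk \<alpha> n)"
        by (auto simp: eventually_sequentially)
      show "\<exists>no. \<forall>n\<ge>no. norm (U (kk \<alpha> n) \<omega> / real (kk \<alpha> n) - 0) < r"
      proof (intro exI allI impI)
        fix n assume "n0 \<le> n"
        then have "\<bar>U (kk \<alpha> n) \<omega>\<bar> < (1/(real j + 1)) * real (kk \<alpha> n)" by (rule n0)
        then have "\<bar>U (kk \<alpha> n) \<omega>\<bar> / real (kk \<alpha> n) < 1/(real j + 1)"
          using kpos[of n] by (simp add: pos_divide_less_eq)
        moreover have "1/(real j + 1) < r" using j by (simp add: inverse_eq_divide add.commute)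
        ultimately show "norm (U (kk \<alpha> n) \<omega> / real (kk \<alpha> n) - 0) < r"
          using kpos[of n] by (simp add: abs_divide)
      qed
    qed
    have Tl: "(\<lambda>n. (\<Sum>i<kk \<alpha> n. T i \<omega>) / real (kk \<alpha> n)) \<longlonglongrightarrow> 0 + expectation (X 0)"
    proof -
      have eq: "(\<Sum>i<kk \<alpha> n. T i \<omega>) / real (kk \<alpha> n) = U (kk \<alpha> n) \<omega> / real (kk \<alpha> n) + (\<Sum>i<kk \<alpha> n. c i) / real (kk \<alpha> n)" for n
        by (simp add: U_T add_divide_distrib[symmetric])
      show ?thesis unfolding eq by (rule tendsto_add[OF Ul cl])
    qed
    obtain i0 where i0: "\<And>i. i \<ge> i0 \<Longrightarrow> X i \<omega> = T i \<omega>" using elim(2) by (auto simp: eventually_sequentially)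
    define D where "D = (\<Sum>i<i0. X i \<omega> - T i \<omega>)"
    have sumeq: "(\<Sum>i<N. X i \<omega>) = (\<Sum>i<N. T i \<omega>) + D" if "N \<ge> i0" for N
    proof -
      have "(\<Sum>i<N. X i \<omega> - T i \<omega>) = (\<Sum>i<i0. X i \<omega> - T i \<omega>) + (\<Sum>i\<in>{i0..<N}. X i \<omega> - T i \<omega>)"
        using sum.atLeastLessThan_concat[of 0 i0 N "\<lambda>i. X i \<omega> - T i \<omega>"] that by (simp add: atLeast0LessThan)
      also have "(\<Sum>i\<in>{i0..<N}. X i \<omega> - T i \<omega>) = 0" using i0 by (intro sum.neutral) auto
      finally show ?thesis unfolding D_def by (simp add: sum_subtractf)
    qed
    have Dl: "(\<lambda>n. D / real (kk \<alpha> n)) \<longlonglongrightarrow> 0"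
      by (rule tendsto_divide_0[OF tendsto_const filterlim_at_top_imp_at_infinity[OF kreal]])
    have A: "(\<lambda>n. (\<Sum>i<kk \<alpha> n. T i \<omega>) / real (kk \<alpha> n) + D / real (kk \<alpha> n)) \<longlonglongrightarrow> (0 + expectation (X 0)) + 0"
      by (rule tendsto_add[OF Tl Dl])
    have B: "eventually (\<lambda>n. (\<Sum>i<kk \<alpha> n. T i \<omega>) / real (kk \<alpha> n) + D / real (kk \<alpha> n) = (\<Sum>i<kk \<alpha> n. X i \<omega>) / real (kk \<alpha> n)) sequentially"
    proof -
      have "eventually (\<lambda>n. i0 \<le> kk \<alpha> n) sequentially" using kk_lim[OF a1] by (simp add: filterlim_at_top)
      then show ?thesis by (rule eventually_mono) (simp add: sumeq add_divide_distrib)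
    qed
    have "(\<lambda>n. (\<Sum>i<kk \<alpha> n. X i \<omega>) / real (kk \<alpha> n)) \<longlonglongrightarrow> (0 + expectation (X 0)) + 0"
      by (rule Lim_transform_eventually[OF A B])
    then show ?case by simp
  qed
qed

theorem slln_nn: "AE \<omega> in M. (\<lambda>N. (\<Sum>i<N. X i \<omega>) / real N) \<longlonglongrightarrow> expectation (X 0)"
proof -
  have "AE \<omega> in M. \<forall>j::nat. (\<lambda>n. (\<Sum>i<kk (1 + 1/(real j+1)) n. X i \<omega>) / real (kk (1 + 1/(real j+1)) n)) \<longlonglongrightarrow> expectation (X 0)"
    by (subst AE_all_countable) (intro allI step_d, simp)
  then show ?thesis
  proof eventually_elim
    case (elim \<omega>)
    show ?case
    proof (rule interp_final[where S="\<lambda>N. \<Sum>i<N. X i \<omega>"])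
      show "mono (\<lambda>N. \<Sum>i<N. X i \<omega>)" by (rule monoI, rule sum_mono2) (auto simp: nn)
      show "\<And>N. 0 \<le> (\<Sum>i<N. X i \<omega>)" by (rule sum_nonneg) (simp add: nn)
      show "0 \<le> expectation (X 0)" by (rule integral_nonneg_AE) (simp add: nn)
      show "\<And>j::nat. (\<lambda>n. (\<Sum>i<kk (1 + 1/(real j+1)) n. X i \<omega>) / real (kk (1 + 1/(real j+1)) n)) \<longlonglongrightarrow> expectation (X 0)"
        using elim by blast
    qed
  qed
qed

end

lemma slln_nn_comp:
  assumes M: "prob_space M" and rv: "\<And>i. Y i \<in> measurable M N"
    and indep: "prob_space.indep_vars M (\<lambda>_. N) Y UNIV"
    and distr: "\<And>i. distr M N (Y i) = \<mu>"
    and g: "g \<in> borel_measurable N" and gnn: "\<And>x. 0 \<le> g x" and gi: "integrable \<mu> g"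
  shows "AE \<omega> in M. (\<lambda>n. (\<Sum>i<n. g (Y i \<omega>)) / real n) \<longlonglongrightarrow> integral\<^sup>L \<mu> g"
proof -
  interpret prob_space M by (rule M)
  have gY: "(\<lambda>\<omega>. g (Y i \<omega>)) \<in> borel_measurable M" for i by (rule measurable_compose[OF rv g])
  have dd: "distr M borel (\<lambda>\<omega>. g (Y i \<omega>)) = distr \<mu> borel g" for i
  proof -
    have "distr (distr M N (Y i)) borel g = distr M borel (g \<circ> Y i)" by (rule distr_distr[OF g rv])
    then show ?thesis unfolding distr[of i] by (simp add: comp_def)
  qed
  have int0: "integrable M (\<lambda>\<omega>. g (Y 0 \<omega>))"
  proof -
    have "integrable (distr M N (Y 0)) g" unfolding distr[of 0] by (rule gi)
    then show ?thesis by (simp add: integrable_distr_eq[OF rv g])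
  qed
  have ex: "expectation (\<lambda>\<omega>. g (Y 0 \<omega>)) = integral\<^sup>L \<mu> g"
  proof -
    have "integral\<^sup>L (distr M N (Y 0)) g = expectation (\<lambda>\<omega>. g (Y 0 \<omega>))" by (rule integral_distr[OF rv g])
    then show ?thesis unfolding distr[of 0] by simp
  qed
  have X: "iid_nn M (\<lambda>i \<omega>. g (Y i \<omega>))"
  proof (rule iid_nn.intro[OF M], rule iid_nn_axioms.intro)
    show "\<And>i. (\<lambda>\<omega>. g (Y i \<omega>)) \<in> borel_measurable M" by (rule gY)
    show "indep_vars (\<lambda>_. borel) (\<lambda>i \<omega>. g (Y i \<omega>)) UNIV"
      by (rule indep_vars_compose2[OF indep]) (rule g)
    show "\<And>i. distr M borel (\<lambda>\<omega>. g (Y i \<omega>)) = distr M borel (\<lambda>\<omega>. g (Y 0 \<omega>))" by (simp only: dd)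
    show "\<And>i \<omega>. 0 \<le> g (Y i \<omega>)" by (rule gnn)
    show "integrable M (\<lambda>\<omega>. g (Y 0 \<omega>))" by (rule int0)
  qed
  have "AE \<omega> in M. (\<lambda>n. (\<Sum>i<n. g (Y i \<omega>)) / real n) \<longlonglongrightarrow> expectation (\<lambda>\<omega>. g (Y 0 \<omega>))"
    by (rule iid_nn.slln_nn[OF X])
  then show ?thesis unfolding ex .
qed

lemma slln_comp:
  assumes M: "prob_space M" and rv: "\<And>i. Y i \<in> measurable M N"
    and indep: "prob_space.indep_vars M (\<lambda>_. N) Y UNIV"
    and distr: "\<And>i. distr M N (Y i) = \<mu>"
    and fi: "integrable \<mu> (f :: _ \<Rightarrow> real)"
  shows "AE \<omega> in M. (\<lambda>n. (\<Sum>i<n. f (Y i \<omega>)) / real n) \<longlonglongrightarrow> integral\<^sup>L \<mu> f"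
proof -
  have sets: "sets \<mu> = sets N" using distr[of 0] by (metis sets_distr)
  have fm: "f \<in> borel_measurable N"
  proof -
    have e: "borel_measurable \<mu> = borel_measurable N" by (rule measurable_cong_sets[OF sets refl])
    show ?thesis using borel_measurable_integrable[OF fi] unfolding e .
  qed
  define fp where "fp x = max (f x) 0" for x
  define fn where "fn x = max (- f x) 0" for x
  have fpm: "fp \<in> borel_measurable N" unfolding fp_def using fm by measurable
  have fnm: "fn \<in> borel_measurable N" unfolding fn_def using fm by measurable
  have fpi: "integrable \<mu> fp" unfolding fp_def by (intro integrable_max fi integrable_zero)
  have fni: "integrable \<mu> fn" unfolding fn_def by (intro integrable_max integrable_minus fi integrable_zero)
  have f_eq: "f x = fp x - fn x" for x unfolding fp_def fn_def by auto
  have ae1: "AE \<omega> in M. (\<lambda>n. (\<Sum>i<n. fp (Y i \<omega>)) / real n) \<longlonglongrightarrow> integral\<^sup>L \<mu> fp"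
    by (rule slln_nn_comp[OF M rv indep distr fpm _ fpi]) (simp add: fp_def)
  have ae2: "AE \<omega> in M. (\<lambda>n. (\<Sum>i<n. fn (Y i \<omega>)) / real n) \<longlonglongrightarrow> integral\<^sup>L \<mu> fn"
    by (rule slln_nn_comp[OF M rv indep distr fnm _ fni]) (simp add: fn_def)
  have int_eq: "integral\<^sup>L \<mu> f = integral\<^sup>L \<mu> fp - integral\<^sup>L \<mu> fn"
    unfolding f_eq[abs_def] by (rule Bochner_Integration.integral_diff[OF fpi fni])
  from ae1 ae2 show ?thesis
  proof eventually_elim
    case (elim \<omega>)
    have "(\<lambda>n. (\<Sum>i<n. fp (Y i \<omega>)) / real n - (\<Sum>i<n. fn (Y i \<omega>)) / real n) \<longlonglongrightarrow> integral\<^sup>L \<mu> fp - integral\<^sup>L \<mu> fn"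
      by (rule tendsto_diff[OF elim])
    moreover have "(\<Sum>i<n. fp (Y i \<omega>)) / real n - (\<Sum>i<n. fn (Y i \<omega>)) / real n = (\<Sum>i<n. f (Y i \<omega>)) / real n" for n
      by (simp add: f_eq sum_subtractf diff_divide_distrib)
    ultimately show ?case unfolding int_eq by simp
  qed
qed

lemma powr_diff_le:
  fixes a b p :: real
  assumes p: "p \<ge> 1" and ab: "0 \<le> a" "a \<le> b"
  shows "b powr p - a powr p \<le> p * b powr (p - 1) * (b - a)"
proof (cases "a = b")
  case True then show ?thesis by simp
next
  case False
  then have ab': "a < b" using ab by simp
  then have b0: "b > 0" using ab by simp
  have bp: "b * b powr (p - 1) = b powr p" using b0 by (simp add: powr_mult_base)
  show ?thesis
  proof (cases "a = 0")
    case True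
    have "1 * b powr p \<le> p * b powr p" by (rule mult_right_mono) (use p in auto)
    then have "b powr p \<le> p * b powr p" by simp
    also have "\<dots> = p * b powr (p - 1) * (b - a)" using True bp by (simp add: mult.commute mult.left_commute)
    finally show ?thesis using True by simp
  next
    case False
    then have a0: "a > 0" using ab by simp
    have der: "\<And>t. a \<le> t \<Longrightarrow> t \<le> b \<Longrightarrow> ((\<lambda>t. t powr p) has_real_derivative p * t powr (p - 1)) (at t)"
      using a0 by (intro has_real_derivative_powr) auto
    obtain z where z: "a < z" "z < b" "b powr p - a powr p = (b - a) * (p * z powr (p - 1))"
      using MVT2[OF ab' der] by blast
    have "z powr (p - 1) \<le> b powr (p - 1)" using z a0 p by (intro powr_mono2) auto
    then have "(b - a) * (p * z powr (p - 1)) \<le> (b - a) * (p * b powr (p - 1))"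
      using ab' p by (intro mult_left_mono) auto
    then show ?thesis using z(3) by (simp add: mult.commute mult.left_commute)
  qed
qed

lemma le_powr_self:
  fixes t p :: real assumes "1 \<le> t" "1 \<le> p"
  shows "t \<le> t powr p"
proof -
  have "t powr p = t * t powr (p - 1)" using assms by (simp add: powr_mult_base)
  moreover have "1 \<le> t powr (p - 1)" using assms by (intro ge_one_powr_ge_zero) auto
  moreover have "t * 1 \<le> t * t powr (p - 1)" using assms \<open>1 \<le> t powr (p - 1)\<close> by (intro mult_left_mono) auto
  ultimately show ?thesis by simp
qed

lemma max_powr_le:
  fixes a b q :: real assumes "0 \<le> a" "0 \<le> b"
  shows "(max a b) powr q \<le> a powr q + b powr q"
  by (cases "a \<le> b") (auto simp: max_def)

lemma sum_powr_bound:
  fixes u B p :: real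
  assumes u: "0 \<le> u" and B: "0 < B" and p: "1 \<le> p"
  shows "(u + B) powr (p - 1) \<le> 2 powr (p - 1) * (u powr (p - 1) + B powr (p - 1))"
proof -
  have "(u + B) powr (p - 1) \<le> (2 * max u B) powr (p - 1)"
    using u B p by (intro powr_mono2) auto
  also have "\<dots> = 2 powr (p - 1) * (max u B) powr (p - 1)"
    using u B by (simp add: powr_mult)
  also have "\<dots> \<le> 2 powr (p - 1) * (u powr (p - 1) + B powr (p - 1))"
    using u B by (intro mult_left_mono max_powr_le) auto
  finally show ?thesis .
qed

lemma dist_meas[measurable]: "(\<lambda>y. dist x y) \<in> borel_measurable borel"
  by (intro borel_measurable_continuous_onI continuous_intros)

lemma dist_meas'[measurable]: "(\<lambda>y. dist y x) \<in> borel_measurable borel"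
  by (intro borel_measurable_continuous_onI continuous_intros)

locale fm_setup =
  fixes \<mu> :: "'a::metric_space measure" and p :: real and x0 :: 'a
  assumes probmu: "prob_space \<mu>" and sets_mu: "sets \<mu> = sets borel" and p1: "1 \<le> p"
    and mom: "integrable \<mu> (\<lambda>y. dist x0 y powr (p - 1))"
begin

sublocale prob_space \<mu> by (rule probmu)

lemma meas_cong: "borel_measurable \<mu> = borel_measurable borel"
  by (rule measurable_cong_sets[OF sets_mu refl])

definition "h x y = dist x y powr p - dist x0 y powr p"
definition "G B y = p * B * (dist x0 y + B) powr (p - 1)"
definition "F x = integral\<^sup>L \<mu> (h x)"

lemma h_meas[measurable]: "h x \<in> borel_measurable borel"
  unfolding h_def[abs_def] by measurable

lemma h_meas_mu: "h x \<in> borel_measurable \<mu>"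
  unfolding meas_cong by (rule h_meas)

lemma G_meas[measurable]: "G B \<in> borel_measurable borel"
  unfolding G_def[abs_def] by measurable

lemma h_lower:
  assumes D: "dist x x0 \<le> D"
  shows "- (p * D * dist x0 y powr (p - 1)) \<le> h x y"
proof (cases "dist x y \<le> dist x0 y")
  case True
  have "dist x0 y powr p - dist x y powr p \<le> p * dist x0 y powr (p - 1) * (dist x0 y - dist x y)"
    by (rule powr_diff_le[OF p1 zero_le_dist True])
  also have "\<dots> \<le> p * dist x0 y powr (p - 1) * D"
  proof (rule mult_left_mono)
    show "dist x0 y - dist x y \<le> D" using D dist_triangle[of x0 y x] by (simp add: dist_commute)
  qed (use p1 in auto)
  finally show ?thesis unfolding h_def by (simp add: mult.commute mult.left_commute)
next
  case False
  then have "dist x0 y powr p \<le> dist x y powr p" by (intro powr_mono2) (use p1 in auto)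
  moreover have "0 \<le> p * D * dist x0 y powr (p - 1)"
  proof -
    have D0: "0 \<le> D" using D zero_le_dist[of x x0] by linarith
    then show ?thesis using p1 by (intro mult_nonneg_nonneg) auto
  qed
  ultimately show ?thesis unfolding h_def by simp
qed

lemma h_upper:
  assumes D: "dist x x0 \<le> D"
  shows "h x y \<le> p * D * (dist x0 y + D) powr (p - 1)"
proof (cases "dist x0 y \<le> dist x y")
  case True
  have "dist x y powr p - dist x0 y powr p \<le> p * dist x y powr (p - 1) * (dist x y - dist x0 y)"
    by (rule powr_diff_le[OF p1 zero_le_dist True])
  also have "\<dots> \<le> p * (dist x0 y + D) powr (p - 1) * D"
  proof (rule mult_mono)
    have "dist x y \<le> dist x0 y + D" using D dist_triangle[of x y x0] by (simp add: dist_commute)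
    then show "p * dist x y powr (p - 1) \<le> p * (dist x0 y + D) powr (p - 1)"
      using p1 by (intro mult_left_mono powr_mono2) auto
    show "dist x y - dist x0 y \<le> D" using D dist_triangle[of x y x0] by (simp add: dist_commute)
  qed (use p1 True in auto)
  finally show ?thesis unfolding h_def by (simp add: mult.commute mult.left_commute)
next
  case False
  then have "dist x y powr p \<le> dist x0 y powr p" by (intro powr_mono2) (use p1 in auto)
  moreover have "0 \<le> p * D * (dist x0 y + D) powr (p - 1)"
  proof -
    have D0: "0 \<le> D" using D zero_le_dist[of x x0] by linarith
    then show ?thesis using p1 by (intro mult_nonneg_nonneg) auto
  qed
  ultimately show ?thesis unfolding h_def by simp
qed

lemma h_abs:
  assumes D: "dist x x0 \<le> D"
  shows "\<bar>h x y\<bar> \<le> G D y"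
proof -
  have D0: "0 \<le> D" using D zero_le_dist[of x x0] by linarith
  have "dist x0 y powr (p - 1) \<le> (dist x0 y + D) powr (p - 1)" using D0 p1 by (intro powr_mono2) auto
  then have "p * D * dist x0 y powr (p - 1) \<le> p * D * (dist x0 y + D) powr (p - 1)"
    using D0 p1 by (intro mult_left_mono) auto
  then show ?thesis using h_lower[OF D, of y] h_upper[OF D, of y] unfolding G_def by linarith
qed

lemma G_nonneg: "0 \<le> B \<Longrightarrow> 0 \<le> G B y"
  unfolding G_def using p1 by simp

lemma G_mono: "0 \<le> B \<Longrightarrow> B \<le> B' \<Longrightarrow> G B y \<le> G B' y"
  unfolding G_def using p1
  by (intro mult_mono powr_mono2) auto

lemma G_int: assumes B: "0 \<le> B" shows "integrable \<mu> (G B)"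
proof (cases "B = 0")
  case True
  have "G B = (\<lambda>y. 0)" using True by (auto simp: G_def fun_eq_iff)
  then show ?thesis by simp
next
  case False
  then have B0: "0 < B" using B by simp
  have i: "integrable \<mu> (\<lambda>y. p * B * (2 powr (p - 1) * (dist x0 y powr (p - 1) + B powr (p - 1))))"
    using mom by (intro integrable_mult_right Bochner_Integration.integrable_add) auto
  show ?thesis
  proof (rule Bochner_Integration.integrable_bound[OF i])
    show "G B \<in> borel_measurable \<mu>" unfolding meas_cong by (rule G_meas)
    show "AE y in \<mu>. norm (G B y) \<le> norm (p * B * (2 powr (p - 1) * (dist x0 y powr (p - 1) + B powr (p - 1))))"
    proof (rule AE_I2)
      fix y
      have "G B y \<le> p * B * (2 powr (p - 1) * (dist x0 y powr (p - 1) + B powr (p - 1)))"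
        unfolding G_def using p1 B0 by (intro mult_left_mono sum_powr_bound) auto
      moreover have "0 \<le> G B y" using G_nonneg B by simp
      ultimately show "norm (G B y) \<le> norm (p * B * (2 powr (p - 1) * (dist x0 y powr (p - 1) + B powr (p - 1))))"
        by simp
    qed
  qed
qed

lemma h_int: "integrable \<mu> (h x)"
proof (rule Bochner_Integration.integrable_bound[OF G_int[of "dist x x0"]])
  show "h x \<in> borel_measurable \<mu>" by (rule h_meas_mu)
  show "AE y in \<mu>. norm (h x y) \<le> norm (G (dist x x0) y)"
    using h_abs[of x "dist x x0"] G_nonneg[of "dist x x0"] by (intro AE_I2) (auto simp: abs_le_iff)
qed simp

lemma Wp_eq: "Wp p \<mu> x x' = F x - F x'"
proof -
  have "Wp p \<mu> x x' = integral\<^sup>L \<mu> (\<lambda>y. h x y - h x' y)"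
    unfolding Wp_def h_def by simp
  also have "\<dots> = F x - F x'" unfolding F_def by (rule Bochner_Integration.integral_diff[OF h_int h_int])
  finally show ?thesis .
qed

lemma Mp_iff: "x \<in> Mp p \<mu> \<longleftrightarrow> (\<forall>x'. F x \<le> F x')"
  unfolding Mp_def Wp_eq by auto

lemma F_cont:
  assumes w: "w \<longlonglongrightarrow> w0"
  shows "(\<lambda>n. F (w n)) \<longlonglongrightarrow> F w0"
proof -
  have "bounded (range w)" using w by (intro convergent_imp_bounded) auto
  then obtain B where B: "\<And>n. dist x0 (w n) \<le> B" unfolding bounded_any_center[of _ x0] by auto
  have B0: "0 \<le> B" using B[of 0] zero_le_dist[of x0 "w 0"] by linarith
  show ?thesis unfolding F_def
  proof (rule integral_dominated_convergence[where w="G B"])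
    show "h w0 \<in> borel_measurable \<mu>" by (rule h_meas_mu)
    show "\<And>n. h (w n) \<in> borel_measurable \<mu>" by (rule h_meas_mu)
    show "integrable \<mu> (G B)" by (rule G_int[OF B0])
    show "AE y in \<mu>. (\<lambda>n. h (w n) y) \<longlonglongrightarrow> h w0 y"
    proof (rule AE_I2)
      fix y
      have "(\<lambda>n. dist (w n) y) \<longlonglongrightarrow> dist w0 y" by (intro tendsto_intros w)
      then have "(\<lambda>n. dist (w n) y powr p) \<longlonglongrightarrow> dist w0 y powr p"
        using p1 by (intro tendsto_powr') auto
      then show "(\<lambda>n. h (w n) y) \<longlonglongrightarrow> h w0 y" unfolding h_def by (intro tendsto_diff tendsto_const)
    qed
    show "\<And>n. AE y in \<mu>. norm (h (w n) y) \<le> G B y"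
      using h_abs B by (intro AE_I2) (simp add: dist_commute)
  qed
qed

end

primrec phi :: "(nat \<Rightarrow> 'a::metric_space) \<Rightarrow> (nat \<times> rat) list \<Rightarrow> 'a \<Rightarrow> real" where
  "phi z [] y = 0"
| "phi z (a # L) y = max (max (real_of_rat (snd a) - dist (z (fst a)) y) 0) (phi z L y)"

lemma phi_nonneg: "0 \<le> phi z L y"
  by (induction L) auto

lemma phi_ge: "(j, r) \<in> set L \<Longrightarrow> real_of_rat r - dist (z j) y \<le> phi z L y"
  by (induction L) auto

lemma phi_le: "0 \<le> u \<Longrightarrow> (\<And>j r. (j, r) \<in> set L \<Longrightarrow> real_of_rat r - dist (z j) y \<le> u) \<Longrightarrow> phi z L y \<le> u"
  by (induction L) (auto simp: max_def)

lemma phi_append: "phi z (L1 @ L2) y = max (phi z L1 y) (phi z L2 y)"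
  by (induction L1) (auto simp: max_def phi_nonneg)

definition Rmax :: "(nat \<times> rat) list \<Rightarrow> real" where
  "Rmax L = sum_list (map (\<lambda>a. \<bar>real_of_rat (snd a)\<bar>) L)"

lemma Rmax_nonneg: "0 \<le> Rmax L"
  unfolding Rmax_def by (induction L) auto

lemma phi_le_Rmax: "phi z L y \<le> Rmax L"
proof (induction L)
  case Nil then show ?case by (simp add: Rmax_def)
next
  case (Cons a L)
  have "real_of_rat (snd a) - dist (z (fst a)) y \<le> \<bar>real_of_rat (snd a)\<bar> + Rmax L"
    using Rmax_nonneg[of L] zero_le_dist[of "z (fst a)" y] by linarith
  moreover have "0 \<le> \<bar>real_of_rat (snd a)\<bar> + Rmax L" using Rmax_nonneg[of L] by simp
  moreover have "phi z L y \<le> \<bar>real_of_rat (snd a)\<bar> + Rmax L"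
    using Cons.IH abs_ge_zero[of "real_of_rat (snd a)"] by linarith
  ultimately show ?case by (simp add: Rmax_def)
qed

lemma phi_meas[measurable]: "phi z L \<in> borel_measurable borel"
proof (induction L)
  case Nil then show ?case by simp
next
  case (Cons a L)
  have "phi z (a # L) = (\<lambda>y. max (max (real_of_rat (snd a) - dist (z (fst a)) y) 0) (phi z L y))"
    by (simp add: fun_eq_iff)
  also have "\<dots> \<in> borel_measurable borel" using Cons by measurable
  finally show ?case .
qed

context fm_setup begin

definition "lowf z L B y = max (phi z L y powr p - dist x0 y powr p) (- G B y)"

lemma lowf_meas[measurable]: "lowf z L B \<in> borel_measurable borel"
  unfolding lowf_def[abs_def] by measurable

lemma lowf_int:
  assumes B: "0 \<le> B"
  shows "integrable \<mu> (lowf z L B)"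
proof (rule Bochner_Integration.integrable_bound)
  show "integrable \<mu> (\<lambda>y. G B y + Rmax L powr p)"
    using G_int[OF B] by (intro Bochner_Integration.integrable_add) auto
  show "lowf z L B \<in> borel_measurable \<mu>" unfolding meas_cong by (rule lowf_meas)
  show "AE y in \<mu>. norm (lowf z L B y) \<le> norm (G B y + Rmax L powr p)"
  proof (rule AE_I2)
    fix y
    have g: "0 \<le> G B y" by (rule G_nonneg[OF B])
    have "phi z L y powr p \<le> Rmax L powr p"
      using p1 phi_le_Rmax phi_nonneg by (intro powr_mono2) auto
    then have a1: "phi z L y powr p - dist x0 y powr p \<le> Rmax L powr p"
      using powr_ge_zero[of "dist x0 y" p] by linarith
    have a2: "- G B y \<le> Rmax L powr p" using g powr_ge_zero[of "Rmax L" p] by linarith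
    have "lowf z L B y \<le> Rmax L powr p" unfolding lowf_def using a1 a2 by simp
    moreover have "- G B y \<le> lowf z L B y" unfolding lowf_def by simp
    ultimately have u1: "lowf z L B y \<le> G B y + Rmax L powr p" and u2: "- (G B y + Rmax L powr p) \<le> lowf z L B y"
      and nn: "0 \<le> G B y + Rmax L powr p"
      using g powr_ge_zero[of "Rmax L" p] by linarith+
    have "\<bar>lowf z L B y\<bar> \<le> G B y + Rmax L powr p" using u1 u2 by (simp add: abs_le_iff)
    then show "norm (lowf z L B y) \<le> norm (G B y + Rmax L powr p)" using abs_of_nonneg[OF nn] by simp
  qed
qed

lemma G_ge_h: "dist x x0 \<le> B \<Longrightarrow> - G B y \<le> h x y"
proof -
  assume D: "dist x x0 \<le> B"
  have B0: "0 \<le> B" using D zero_le_dist[of x x0] by linarith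
  have "dist x0 y powr (p - 1) \<le> (dist x0 y + B) powr (p - 1)" using B0 p1 by (intro powr_mono2) auto
  then have "p * B * dist x0 y powr (p - 1) \<le> G B y"
    unfolding G_def using B0 p1 by (intro mult_left_mono) auto
  then show ?thesis using h_lower[OF D, of y] by linarith
qed

lemma lowf_le_h:
  assumes D: "dist x x0 \<le> B" and ph: "\<And>y. phi z L y \<le> dist x y"
  shows "lowf z L B y \<le> h x y"
proof -
  have "phi z L y powr p \<le> dist x y powr p" using ph[of y] phi_nonneg p1 by (intro powr_mono2) auto
  then have "phi z L y powr p - dist x0 y powr p \<le> h x y" unfolding h_def by simp
  then show ?thesis unfolding lowf_def using G_ge_h[OF D] by simp
qed

end

locale fm_dense = fm_setup +
  fixes z :: "nat \<Rightarrow> 'a"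
  assumes dense: "\<And>y e. e > 0 \<Longrightarrow> \<exists>j. dist (z j) y < e"
begin

lemma approx_lists:
  fixes w :: 'a
  obtains LL :: "nat \<Rightarrow> (nat \<times> rat) list" where
    "\<And>J j r. (j, r) \<in> set (LL J) \<Longrightarrow> real_of_rat r < dist w (z j)"
    "\<And>y. (\<lambda>J. phi z (LL J) y) \<longlonglongrightarrow> dist w y"
    "\<And>J y. phi z (LL J) y \<le> dist w y"
proof -
  have "\<forall>J j. \<exists>q::rat. dist w (z j) - 1/(real J + 1) < of_rat q \<and> of_rat q < dist w (z j)"
    by (intro allI of_rat_dense) simp
  then obtain rq :: "nat \<Rightarrow> nat \<Rightarrow> rat" where
    rq: "\<And>J j. dist w (z j) - 1/(real J + 1) < of_rat (rq J j) \<and> of_rat (rq J j) < dist w (z j)"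
    by metis
  define LL where "LL J = map (\<lambda>j. (j, rq J j)) [0..<J]" for J
  have mem: "(j, r) \<in> set (LL J) \<longleftrightarrow> j < J \<and> r = rq J j" for j r J
    unfolding LL_def by auto
  have i: "real_of_rat r < dist w (z j)" if "(j, r) \<in> set (LL J)" for J j r
    using that rq unfolding mem by auto
  have iii: "phi z (LL J) y \<le> dist w y" for J y
  proof (rule phi_le)
    fix j r assume "(j, r) \<in> set (LL J)"
    then have "real_of_rat r < dist w (z j)" by (rule i)
    moreover have "dist w (z j) \<le> dist w y + dist (z j) y" using dist_triangle[of w "z j" y] by (simp add: dist_commute)
    ultimately show "real_of_rat r - dist (z j) y \<le> dist w y" by linarith
  qed simp
  have ii: "(\<lambda>J. phi z (LL J) y) \<longlonglongrightarrow> dist w y" for y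
  proof (rule LIMSEQ_I)
    fix \<eta> :: real assume \<eta>: "0 < \<eta>"
    obtain j0 where j0: "dist (z j0) y < \<eta>/3" using dense[of "\<eta>/3"] \<eta> by auto
    obtain J0 :: nat where J0: "inverse (real (Suc J0)) < \<eta>/3" using reals_Archimedean \<eta> by (metis divide_pos_pos zero_less_numeral)
    show "\<exists>no. \<forall>J\<ge>no. norm (phi z (LL J) y - dist w y) < \<eta>"
    proof (intro exI allI impI)
      fix J assume J: "max (Suc j0) J0 \<le> J"
      then have "(j0, rq J j0) \<in> set (LL J)" unfolding mem by auto
      then have "real_of_rat (rq J j0) - dist (z j0) y \<le> phi z (LL J) y" by (rule phi_ge)
      moreover have "dist w (z j0) - 1/(real J + 1) < of_rat (rq J j0)" using rq by blast
      moreover have "1/(real J + 1) \<le> inverse (real (Suc J0))"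
        using J by (simp add: inverse_eq_divide frac_le)
      moreover have "dist w y \<le> dist w (z j0) + dist (z j0) y" by (rule dist_triangle)
      ultimately have "dist w y - \<eta> < phi z (LL J) y" using j0 J0 by linarith
      then show "norm (phi z (LL J) y - dist w y) < \<eta>" using iii[of J y] \<eta> by auto
    qed
  qed
  show ?thesis by (rule that[OF i ii iii])
qed

definition "tg w L0 B y = max ((max (dist w y) (phi z L0 y)) powr p - dist x0 y powr p) (- G B y)"

lemma tg_meas[measurable]: "tg w L0 B \<in> borel_measurable borel"
  unfolding tg_def[abs_def] by measurable

lemma tg_ge_h: "dist w x0 \<le> B \<Longrightarrow> h w y \<le> tg w L0 B y"
proof -
  have "dist w y powr p \<le> (max (dist w y) (phi z L0 y)) powr p" using p1 by (intro powr_mono2) auto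
  then show ?thesis unfolding tg_def h_def by auto
qed

lemma tg_Nil: "dist w x0 \<le> B \<Longrightarrow> tg w [] B y = h w y"
  unfolding tg_def using G_ge_h[of w B y] by (auto simp: h_def max_def phi_nonneg)

lemma tg_int:
  assumes D: "dist w x0 \<le> B"
  shows "integrable \<mu> (tg w L0 B)"
proof (rule Bochner_Integration.integrable_bound)
  have B0: "0 \<le> B" using D zero_le_dist[of w x0] by linarith
  show "integrable \<mu> (\<lambda>y. G B y + \<bar>h w y\<bar> + Rmax L0 powr p)"
    using G_int[OF B0] h_int[of w] by (intro Bochner_Integration.integrable_add) auto
  show "tg w L0 B \<in> borel_measurable \<mu>" unfolding meas_cong by (rule tg_meas)
  show "AE y in \<mu>. norm (tg w L0 B y) \<le> norm (G B y + \<bar>h w y\<bar> + Rmax L0 powr p)"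
  proof (rule AE_I2)
    fix y
    have g: "0 \<le> G B y" by (rule G_nonneg[OF B0])
    have "(max (dist w y) (phi z L0 y)) powr p \<le> dist w y powr p + phi z L0 y powr p"
      by (rule max_powr_le) (auto simp: phi_nonneg)
    moreover have "phi z L0 y powr p \<le> Rmax L0 powr p"
      using p1 phi_le_Rmax phi_nonneg by (intro powr_mono2) auto
    ultimately have c1: "(max (dist w y) (phi z L0 y)) powr p - dist x0 y powr p \<le> h w y + Rmax L0 powr p + G B y"
      unfolding h_def using g by linarith
    have c2: "- G B y \<le> h w y + Rmax L0 powr p + G B y"
      using G_ge_h[OF D, of y] g powr_ge_zero[of "Rmax L0" p] by linarith
    have "tg w L0 B y \<le> h w y + Rmax L0 powr p + G B y"
      unfolding tg_def using c1 c2 by simp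
    moreover have "- G B y \<le> tg w L0 B y" unfolding tg_def by simp
    ultimately have u1: "tg w L0 B y \<le> G B y + \<bar>h w y\<bar> + Rmax L0 powr p"
      and u2: "- (G B y + \<bar>h w y\<bar> + Rmax L0 powr p) \<le> tg w L0 B y"
      and nn: "0 \<le> G B y + \<bar>h w y\<bar> + Rmax L0 powr p"
      using g powr_ge_zero[of "Rmax L0" p] abs_ge_self[of "h w y"] abs_ge_zero[of "h w y"] by linarith+
    have "\<bar>tg w L0 B y\<bar> \<le> G B y + \<bar>h w y\<bar> + Rmax L0 powr p" using u1 u2 by (simp add: abs_le_iff)
    then show "norm (tg w L0 B y) \<le> norm (G B y + \<bar>h w y\<bar> + Rmax L0 powr p)"
      using abs_of_nonneg[OF nn] by simp
  qed
qed

lemma lowf_tg_lim: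
  assumes D: "dist w x0 \<le> B"
    and LL: "\<And>y. (\<lambda>J. phi z (LL J) y) \<longlonglongrightarrow> dist w y" "\<And>J y. phi z (LL J) y \<le> dist w y"
  shows "(\<lambda>J. integral\<^sup>L \<mu> (lowf z (LL J @ L0) B)) \<longlonglongrightarrow> integral\<^sup>L \<mu> (tg w L0 B)"
proof (rule integral_dominated_convergence[where w="\<lambda>y. G B y + \<bar>tg w L0 B y\<bar>"])
  have B0: "0 \<le> B" using D zero_le_dist[of w x0] by linarith
  show "tg w L0 B \<in> borel_measurable \<mu>" unfolding meas_cong by (rule tg_meas)
  show "\<And>J. lowf z (LL J @ L0) B \<in> borel_measurable \<mu>" unfolding meas_cong by (rule lowf_meas)
  show "integrable \<mu> (\<lambda>y. G B y + \<bar>tg w L0 B y\<bar>)"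
    using G_int[OF B0] tg_int[OF D] by (intro Bochner_Integration.integrable_add integrable_abs) auto
  show "AE y in \<mu>. (\<lambda>J. lowf z (LL J @ L0) B y) \<longlonglongrightarrow> tg w L0 B y"
  proof (rule AE_I2)
    fix y
    have "(\<lambda>J. max (phi z (LL J) y) (phi z L0 y)) \<longlonglongrightarrow> max (dist w y) (phi z L0 y)"
      by (intro tendsto_max LL tendsto_const)
    then have "(\<lambda>J. (max (phi z (LL J) y) (phi z L0 y)) powr p) \<longlonglongrightarrow> (max (dist w y) (phi z L0 y)) powr p"
      using p1 by (intro tendsto_powr') (auto simp: phi_nonneg le_max_iff_disj)
    then have "(\<lambda>J. max ((max (phi z (LL J) y) (phi z L0 y)) powr p - dist x0 y powr p) (- G B y)) \<longlonglongrightarrow> tg w L0 B y"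
      unfolding tg_def by (intro tendsto_max tendsto_diff tendsto_const)
    then show "(\<lambda>J. lowf z (LL J @ L0) B y) \<longlonglongrightarrow> tg w L0 B y"
      unfolding lowf_def phi_append .
  qed
  show "\<And>J. AE y in \<mu>. norm (lowf z (LL J @ L0) B y) \<le> G B y + \<bar>tg w L0 B y\<bar>"
  proof (intro AE_I2)
    fix J y
    have g: "0 \<le> G B y" by (rule G_nonneg[OF B0])
    have "max (phi z (LL J) y) (phi z L0 y) powr p \<le> (max (dist w y) (phi z L0 y)) powr p"
      using p1 LL(2)[of J y] by (intro powr_mono2) (auto simp: phi_nonneg le_max_iff_disj)
    then have "lowf z (LL J @ L0) B y \<le> tg w L0 B y"
      unfolding lowf_def tg_def phi_append by auto
    moreover have "- G B y \<le> lowf z (LL J @ L0) B y" unfolding lowf_def by simp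
    ultimately show "norm (lowf z (LL J @ L0) B y) \<le> G B y + \<bar>tg w L0 B y\<bar>" using g by auto
  qed
qed

end

lemma emp_integral:
  assumes n: "1 \<le> n"
  shows "integral\<^sup>L (empirical_measure Y n \<omega>) f = (\<Sum>i<n. f (Y i \<omega>)) / real n"
proof -
  have ne: "{..<n} \<noteq> {}" using n by (simp add: lessThan_empty_iff)
  have "integral\<^sup>L (empirical_measure Y n \<omega>) f = integral\<^sup>L (measure_pmf (pmf_of_set {..<n})) (\<lambda>i. f (Y i \<omega>))"
    unfolding empirical_measure_def by simp
  also have "\<dots> = (\<Sum>i<n. f (Y i \<omega>)) / real (card {..<n})"
    by (rule integral_pmf_of_set[OF ne]) simp
  finally show ?thesis by simp
qed

context fm_setup begin

lemma emp_Mp: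
  assumes n: "1 \<le> n" and x: "x \<in> Mp p (empirical_measure Y n \<omega>)"
  shows "(\<Sum>i<n. h x (Y i \<omega>)) \<le> (\<Sum>i<n. h x' (Y i \<omega>))"
proof -
  have "Wp p (empirical_measure Y n \<omega>) x x' \<le> 0" using x unfolding Mp_def by auto
  then have "(\<Sum>i<n. dist x (Y i \<omega>) powr p - dist x' (Y i \<omega>) powr p) / real n \<le> 0"
    unfolding Wp_def emp_integral[OF n] .
  then have "(\<Sum>i<n. dist x (Y i \<omega>) powr p - dist x' (Y i \<omega>) powr p) \<le> 0"
    using n by (simp add: divide_le_0_iff)
  moreover have "(\<Sum>i<n. h x (Y i \<omega>)) - (\<Sum>i<n. h x' (Y i \<omega>)) = (\<Sum>i<n. dist x (Y i \<omega>) powr p - dist x' (Y i \<omega>) powr p)"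
    unfolding h_def by (simp add: sum_subtractf[symmetric])
  ultimately show ?thesis by linarith
qed

end

context fm_dense begin

lemma support_exists: "\<exists>y0. \<forall>r>0. 0 < measure \<mu> (ball y0 r)"
proof (rule ccontr)
  assume "\<not> ?thesis"
  then have nz: "\<forall>y. \<exists>r>0. measure \<mu> (ball y r) = 0"
    using measure_nonneg by (metis linorder_neqE_linordered_idom not_less)
  have sp: "space \<mu> = UNIV" using sets_eq_imp_space_eq[OF sets_mu] by simp
  define N where "N = (\<lambda>(j, n). if measure \<mu> (ball (z j) (1 / Suc n)) = 0 then ball (z j) (1 / Suc n) else {})"
  have Nnull: "N jn \<in> null_sets \<mu>" for jn
  proof (cases jn)
    case (Pair j n)
    have bs: "ball (z j) (1 / Suc n) \<in> sets \<mu>" unfolding sets_mu by simp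
    show ?thesis
    proof (cases "measure \<mu> (ball (z j) (1 / Suc n)) = 0")
      case True
      then have "emeasure \<mu> (ball (z j) (1 / Suc n)) = 0"
        using bs by (simp add: emeasure_eq_measure)
      then show ?thesis using bs True Pair unfolding N_def by auto
    next
      case False then show ?thesis using Pair unfolding N_def by auto
    qed
  qed
  have cover: "UNIV \<subseteq> (\<Union>jn. N jn)"
  proof
    fix y :: 'a
    obtain r where r: "r > 0" "measure \<mu> (ball y r) = 0" using nz by blast
    obtain n :: nat where n: "inverse (real (Suc n)) < r / 2" using reals_Archimedean r by (metis half_gt_zero)
    obtain j where j: "dist (z j) y < 1 / Suc n" using dense[of "1 / Suc n"] by auto
    have sub: "ball (z j) (1 / Suc n) \<subseteq> ball y r"
    proof
      fix u assume "u \<in> ball (z j) (1 / Suc n)"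
      then have "dist (z j) u < 1 / Suc n" by simp
      moreover have "dist y u \<le> dist (z j) y + dist (z j) u" using dist_triangle[of y u "z j"] by (simp add: dist_commute)
      ultimately have "dist y u < 2 / Suc n" using j by simp
      also have "2 / Suc n < r" using n by (simp add: inverse_eq_divide field_simps)
      finally show "u \<in> ball y r" by simp
    qed
    have "measure \<mu> (ball (z j) (1 / Suc n)) \<le> measure \<mu> (ball y r)"
      by (rule finite_measure_mono[OF sub]) (simp add: sets_mu)
    then have "measure \<mu> (ball (z j) (1 / Suc n)) = 0" using r measure_nonneg[of \<mu>] by (metis order_antisym)
    then have "y \<in> N (j, n)" unfolding N_def using j by (simp add: dist_commute)
    then show "y \<in> (\<Union>jn. N jn)" by blast
  qed
  have "(\<Union>jn. N jn) \<in> null_sets \<mu>" using Nnull by (intro null_sets_UN) auto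
  then have "emeasure \<mu> (\<Union>jn. N jn) = 0" by auto
  moreover have "emeasure \<mu> (\<Union>jn. N jn) = emeasure \<mu> (space \<mu>)" using cover sp by (metis top.extremum_uniqueI)
  ultimately show False using emeasure_space_1 by simp
qed

end

locale fm_core = fm_dense +
  fixes c :: "(nat \<Rightarrow> 'a) \<Rightarrow> 'a \<Rightarrow> bool" and yy :: "nat \<Rightarrow> 'a"
    and nk :: "nat \<Rightarrow> nat" and xs :: "nat \<Rightarrow> 'a" and xstar :: 'a and B :: nat
  assumes W: "is_weak_convergence c"
    and G1: "\<And>j. (\<lambda>n. (\<Sum>i<n. h (z j) (yy i)) / real n) \<longlonglongrightarrow> F (z j)"
    and G3: "\<And>L (B'::nat). (\<lambda>n. (\<Sum>i<n. lowf z L (real B') (yy i)) / real n) \<longlonglongrightarrow> integral\<^sup>L \<mu> (lowf z L (real B'))"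
    and nk: "strict_mono nk" "\<And>k. 1 \<le> nk k"
    and mini: "\<And>k x'. (\<Sum>i<nk k. h (xs k) (yy i)) \<le> (\<Sum>i<nk k. h x' (yy i))"
    and bd: "\<And>k. dist (xs k) x0 \<le> real B"
    and cx: "c xs xstar"
begin

lemma W2: "ereal (dist xstar y) \<le> liminf (\<lambda>k. ereal (dist (xs k) y))"
  using W cx unfolding is_weak_convergence_def by blast

lemma ev_gt: "ereal r < ereal (dist xstar y) \<Longrightarrow> eventually (\<lambda>k. r < dist (xs k) y) sequentially"
proof -
  assume "ereal r < ereal (dist xstar y)"
  then have "ereal r < liminf (\<lambda>k. ereal (dist (xs k) y))" using W2[of y] by (rule less_le_trans)
  then have "eventually (\<lambda>k. ereal r < ereal (dist (xs k) y)) sequentially" by (rule less_LiminfD)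
  then show ?thesis by simp
qed

lemma xstar_bd: "dist xstar x0 \<le> real B"
proof (rule ccontr)
  assume "\<not> ?thesis"
  then have "ereal (real B) < ereal (dist xstar x0)" by simp
  then have "eventually (\<lambda>k. real B < dist (xs k) x0) sequentially" by (rule ev_gt)
  then obtain k where "real B < dist (xs k) x0" by (auto simp: eventually_sequentially)
  then show False using bd[of k] by simp
qed

lemma phi_le_of_pairs:
  assumes "\<forall>(j, r)\<in>set L. real_of_rat r < dist x (z j)"
  shows "phi z L y \<le> dist x y"
proof (rule phi_le)
  fix j r assume "(j, r) \<in> set L"
  then have "real_of_rat r < dist x (z j)" using assms by auto
  moreover have "dist x (z j) \<le> dist x y + dist (z j) y" using dist_triangle[of x "z j" y] by (simp add: dist_commute)
  ultimately show "real_of_rat r - dist (z j) y \<le> dist x y" by linarith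
qed simp

lemma keyQ:
  assumes ev: "eventually (\<lambda>k. \<forall>(j, r)\<in>set L. real_of_rat r < dist (xs k) (z j)) sequentially"
  shows "integral\<^sup>L \<mu> (lowf z L (real B)) \<le> F w"
proof -
  have avg_le: "(\<Sum>i<nk k. lowf z L (real B) (yy i)) / real (nk k) \<le> (\<Sum>i<nk k. h (z j) (yy i)) / real (nk k)"
    if k: "\<forall>(j, r)\<in>set L. real_of_rat r < dist (xs k) (z j)" for k j
  proof -
    have "(\<Sum>i<nk k. lowf z L (real B) (yy i)) \<le> (\<Sum>i<nk k. h (xs k) (yy i))"
      by (intro sum_mono lowf_le_h[OF bd] phi_le_of_pairs k)
    also have "\<dots> \<le> (\<Sum>i<nk k. h (z j) (yy i))" by (rule mini)
    finally show ?thesis using nk(2)[of k] by (intro divide_right_mono) auto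
  qed
  have le_zj: "integral\<^sup>L \<mu> (lowf z L (real B)) \<le> F (z j)" for j
  proof (rule tendsto_le[OF sequentially_bot])
    show "((\<lambda>n. (\<Sum>i<n. h (z j) (yy i)) / real n) \<circ> nk) \<longlonglongrightarrow> F (z j)"
      by (rule LIMSEQ_subseq_LIMSEQ[OF G1 nk(1)])
    show "((\<lambda>n. (\<Sum>i<n. lowf z L (real B) (yy i)) / real n) \<circ> nk) \<longlonglongrightarrow> integral\<^sup>L \<mu> (lowf z L (real B))"
      by (rule LIMSEQ_subseq_LIMSEQ[OF G3 nk(1)])
    show "eventually (\<lambda>k. ((\<lambda>n. (\<Sum>i<n. lowf z L (real B) (yy i)) / real n) \<circ> nk) k
        \<le> ((\<lambda>n. (\<Sum>i<n. h (z j) (yy i)) / real n) \<circ> nk) k) sequentially"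
      using ev by (rule eventually_mono) (simp add: avg_le)
  qed
  have "\<forall>n. \<exists>j. dist (z j) w < 1 / Suc n" using dense by simp
  then obtain js where js: "\<And>n. dist (z (js n)) w < 1 / Suc n" by metis
  have "(\<lambda>n. z (js n)) \<longlonglongrightarrow> w"
  proof (rule tendsto_sandwich[where f="\<lambda>n. 0" and h="\<lambda>n. 1 / Suc n", THEN tendsto_dist_iff[THEN iffD2]])
    show "eventually (\<lambda>n. 0 \<le> dist (z (js n)) w) sequentially" by simp
    show "eventually (\<lambda>n. dist (z (js n)) w \<le> 1 / Suc n) sequentially" using js by (simp add: less_imp_le)
    show "(\<lambda>n. 0::real) \<longlonglongrightarrow> 0" by simp
    show "(\<lambda>n. 1 / real (Suc n)) \<longlonglongrightarrow> 0" by (rule LIMSEQ_Suc[OF lim_const_over_n])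
  qed
  then have "(\<lambda>n. F (z (js n))) \<longlonglongrightarrow> F w" by (rule F_cont)
  then show ?thesis by (rule LIMSEQ_le_const) (use le_zj in auto)
qed

lemma tg_bound:
  assumes ev0: "eventually (\<lambda>k. \<forall>(j, r)\<in>set L0. real_of_rat r < dist (xs k) (z j)) sequentially"
  shows "integral\<^sup>L \<mu> (tg xstar L0 (real B)) \<le> F w"
proof -
  obtain LL :: "nat \<Rightarrow> (nat \<times> rat) list" where
    LL1: "\<And>J j r. (j, r) \<in> set (LL J) \<Longrightarrow> real_of_rat r < dist xstar (z j)" and
    LL2: "\<And>y. (\<lambda>J. phi z (LL J) y) \<longlonglongrightarrow> dist xstar y" and
    LL3: "\<And>J y. phi z (LL J) y \<le> dist xstar y"
    by (rule approx_lists[of xstar]) blast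
  have le: "integral\<^sup>L \<mu> (lowf z (LL J @ L0) (real B)) \<le> F w" for J
  proof (rule keyQ)
    have "eventually (\<lambda>k. \<forall>a\<in>set (LL J). real_of_rat (snd a) < dist (xs k) (z (fst a))) sequentially"
    proof (rule eventually_ball_finite, simp, intro ballI)
      fix a assume "a \<in> set (LL J)"
      then have "real_of_rat (snd a) < dist xstar (z (fst a))" using LL1[of "fst a" "snd a" J] by simp
      then show "eventually (\<lambda>k. real_of_rat (snd a) < dist (xs k) (z (fst a))) sequentially"
        by (intro ev_gt) simp
    qed
    then show "eventually (\<lambda>k. \<forall>(j, r)\<in>set (LL J @ L0). real_of_rat r < dist (xs k) (z j)) sequentially"
      using ev0 by eventually_elim auto
  qed
  have "(\<lambda>J. integral\<^sup>L \<mu> (lowf z (LL J @ L0) (real B))) \<longlonglongrightarrow> integral\<^sup>L \<mu> (tg xstar L0 (real B))"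
    by (rule lowf_tg_lim[OF xstar_bd LL2 LL3])
  then show ?thesis by (rule LIMSEQ_le_const2) (use le in auto)
qed

lemma xstar_Mp: "xstar \<in> Mp p \<mu>"
proof -
  have "F xstar \<le> F w" for w
  proof -
    have "integral\<^sup>L \<mu> (tg xstar [] (real B)) \<le> F w" by (rule tg_bound) simp
    moreover have "tg xstar [] (real B) = h xstar" using tg_Nil[OF xstar_bd] by (simp add: fun_eq_iff)
    ultimately show ?thesis unfolding F_def by simp
  qed
  then show ?thesis unfolding Mp_iff by blast
qed

lemma conv_point: "\<exists>y s. strict_mono s \<and> (\<lambda>k. dist (xs (s k)) y) \<longlonglongrightarrow> dist xstar y"
proof (rule ccontr)
  assume nc: "\<not> ?thesis"
  obtain y0 where y0: "\<And>r. r > 0 \<Longrightarrow> 0 < measure \<mu> (ball y0 r)" using support_exists by blast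
  define d where "d = dist xstar y0"
  have "ereal d < liminf (\<lambda>k. ereal (dist (xs k) y0))"
  proof (rule ccontr)
    assume "\<not> ereal d < liminf (\<lambda>k. ereal (dist (xs k) y0))"
    then have eq: "liminf (\<lambda>k. ereal (dist (xs k) y0)) = ereal d" using W2[of y0] unfolding d_def by simp
    obtain s where s: "strict_mono s" "((\<lambda>k. ereal (dist (xs k) y0)) \<circ> s) \<longlonglongrightarrow> liminf (\<lambda>k. ereal (dist (xs k) y0))"
      using liminf_subseq_lim by blast
    then have "(\<lambda>k. dist (xs (s k)) y0) \<longlonglongrightarrow> d" unfolding eq by (simp add: comp_def)
    then show False using nc s(1) unfolding d_def by blast
  qed
  then obtain q' where q': "ereal d < ereal q'" "ereal q' < liminf (\<lambda>k. ereal (dist (xs k) y0))"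
    using ereal_dense2 by blast
  define \<gamma> where "\<gamma> = q' - d"
  have g: "\<gamma> > 0" using q'(1) unfolding \<gamma>_def by simp
  have evy0: "eventually (\<lambda>k. d + \<gamma> < dist (xs k) y0) sequentially"
    using less_LiminfD[OF q'(2)] unfolding \<gamma>_def by simp
  obtain j' where j': "dist (z j') y0 < \<gamma>/4" using dense[of "\<gamma>/4"] g by auto
  obtain q :: rat where q: "d + \<gamma>/2 < of_rat q" "of_rat q < d + 3*\<gamma>/4" using of_rat_dense[of "d + \<gamma>/2" "d + 3*\<gamma>/4"] g by auto
  define L0 where "L0 = [(j', q)]"
  have ev0: "eventually (\<lambda>k. \<forall>(j, r)\<in>set L0. real_of_rat r < dist (xs k) (z j)) sequentially"
  proof (rule eventually_mono[OF evy0])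
    fix k assume k: "d + \<gamma> < dist (xs k) y0"
    have "dist (xs k) y0 \<le> dist (xs k) (z j') + dist (z j') y0" by (rule dist_triangle)
    then have "of_rat q < dist (xs k) (z j')" using k j' q by linarith
    then show "\<forall>(j, r)\<in>set L0. real_of_rat r < dist (xs k) (z j)" unfolding L0_def by simp
  qed
  have le: "integral\<^sup>L \<mu> (tg xstar L0 (real B)) \<le> F xstar" by (rule tg_bound[OF ev0])
  define f where "f y = tg xstar L0 (real B) y - h xstar y" for y
  have f0: "0 \<le> f y" for y unfolding f_def using tg_ge_h[OF xstar_bd] by simp
  have fint: "integrable \<mu> f" unfolding f_def[abs_def]
    by (intro Bochner_Integration.integrable_diff tg_int[OF xstar_bd] h_int)
  have "integral\<^sup>L \<mu> f = integral\<^sup>L \<mu> (tg xstar L0 (real B)) - F xstar"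
    unfolding f_def[abs_def] F_def by (rule Bochner_Integration.integral_diff[OF tg_int[OF xstar_bd] h_int])
  then have "integral\<^sup>L \<mu> f \<le> 0" using le by simp
  moreover have "0 \<le> integral\<^sup>L \<mu> f" by (intro integral_nonneg_AE) (simp add: f0)
  ultimately have "integral\<^sup>L \<mu> f = 0" by simp
  then have aef: "AE y in \<mu>. f y = 0" using integral_nonneg_eq_0_iff_AE[OF fint] f0 by simp
  have pos: "f y > 0" if y: "y \<in> ball y0 (\<gamma>/8)" for y
  proof -
    have dy: "dist y0 y < \<gamma>/8" using y by simp
    have "real_of_rat q - dist (z j') y \<le> phi z L0 y" unfolding L0_def by (rule phi_ge) simp
    moreover have "dist (z j') y \<le> dist (z j') y0 + dist y0 y" by (rule dist_triangle)
    moreover have "dist xstar y \<le> dist xstar y0 + dist y0 y" by (rule dist_triangle)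
    ultimately have lt: "dist xstar y < phi z L0 y" using j' q dy unfolding d_def by linarith
    then have "max (dist xstar y) (phi z L0 y) = phi z L0 y" by simp
    moreover have "dist xstar y powr p < phi z L0 y powr p" using lt p1 by (intro powr_less_mono2) auto
    ultimately have "h xstar y < max (dist xstar y) (phi z L0 y) powr p - dist x0 y powr p"
      unfolding h_def by simp
    then show ?thesis unfolding f_def tg_def by simp
  qed
  have aeb: "AE y in \<mu>. y \<notin> ball y0 (\<gamma>/8)" using aef by eventually_elim (use pos in force)
  have bs: "ball y0 (\<gamma>/8) \<in> sets \<mu>" by (simp add: sets_mu)
  have sp: "space \<mu> = UNIV" using sets_eq_imp_space_eq[OF sets_mu] by simp
  have eqset: "{x\<in>space \<mu>. \<not> (x \<notin> ball y0 (\<gamma>/8))} = ball y0 (\<gamma>/8)" using sp by blast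
  have "emeasure \<mu> (ball y0 (\<gamma>/8)) = 0" by (rule AE_iff_measurable[OF bs eqset, THEN iffD1, OF aeb])
  then have "measure \<mu> (ball y0 (\<gamma>/8)) = 0" by (simp add: measure_def)
  then show False using y0[of "\<gamma>/8"] g by simp
qed

lemma core: "xstar \<in> Mp p \<mu> \<and> (\<exists>s. strict_mono s \<and> (\<lambda>k. dist (xs (s k)) xstar) \<longlonglongrightarrow> 0)"
proof -
  obtain y s where s: "strict_mono s" "(\<lambda>k. dist (xs (s k)) y) \<longlonglongrightarrow> dist xstar y" using conv_point by blast
  have cs: "c (xs \<circ> s) xstar" using W cx s(1) unfolding is_weak_convergence_def is_convergence_def by blast
  have "(\<lambda>n. dist ((xs \<circ> s) n) y) \<longlonglongrightarrow> dist xstar y" using s(2) by (simp add: comp_def)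
  then have "(\<lambda>n. dist ((xs \<circ> s) n) xstar) \<longlonglongrightarrow> 0" using W cs unfolding is_weak_convergence_def by blast
  then show ?thesis using xstar_Mp s(1) by (auto simp: comp_def)
qed

end

context fm_setup begin

definition "ind R y = (if dist x0 y \<le> real R then 1 else (0::real))"
definition "tail R y = (if dist x0 y \<le> real R then 0 else dist x0 y powr (p - 1))"

lemma ind_meas[measurable]: "ind R \<in> borel_measurable borel"
  unfolding ind_def[abs_def] by measurable

lemma tail_meas[measurable]: "tail R \<in> borel_measurable borel"
  unfolding tail_def[abs_def] by measurable

lemma ind_int: "integrable \<mu> (ind R)"
proof (rule integrable_const_bound[where B=1])
  show "AE y in \<mu>. norm (ind R y) \<le> 1" by (rule AE_I2) (simp add: ind_def)
  show "ind R \<in> borel_measurable \<mu>" unfolding meas_cong by (rule ind_meas)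
qed

lemma tail_int: "integrable \<mu> (tail R)"
proof (rule Bochner_Integration.integrable_bound[OF mom])
  show "tail R \<in> borel_measurable \<mu>" unfolding meas_cong by (rule tail_meas)
  show "AE y in \<mu>. norm (tail R y) \<le> norm (dist x0 y powr (p - 1))" by (rule AE_I2) (simp add: tail_def)
qed

lemma R_exists: "\<exists>R::nat. 3/4 < integral\<^sup>L \<mu> (ind R) \<and> p * integral\<^sup>L \<mu> (tail R) < 1/4"
proof -
  have ev_big: "eventually (\<lambda>R::nat. dist x0 y \<le> real R) sequentially" for y
  proof -
    obtain n :: nat where "dist x0 y < real n" using reals_Archimedean2 by blast
    then show ?thesis by (intro eventually_sequentiallyI[of n]) auto
  qed
  have l1: "(\<lambda>R. integral\<^sup>L \<mu> (ind R)) \<longlonglongrightarrow> integral\<^sup>L \<mu> (\<lambda>y. 1)"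
  proof (rule integral_dominated_convergence[where w="\<lambda>y. 1"])
    show "(\<lambda>y. 1::real) \<in> borel_measurable \<mu>" by simp
    show "\<And>R. ind R \<in> borel_measurable \<mu>" unfolding meas_cong by (rule ind_meas)
    show "integrable \<mu> (\<lambda>y. 1::real)" by simp
    show "AE y in \<mu>. (\<lambda>R. ind R y) \<longlonglongrightarrow> 1"
    proof (rule AE_I2)
      fix y
      have "eventually (\<lambda>R. ind R y = 1) sequentially" using ev_big[of y] by eventually_elim (simp add: ind_def)
      then show "(\<lambda>R. ind R y) \<longlonglongrightarrow> 1" by (rule tendsto_eventually)
    qed
    show "\<And>R. AE y in \<mu>. norm (ind R y) \<le> 1" by (intro AE_I2) (simp add: ind_def)
  qed
  have l2: "(\<lambda>R. integral\<^sup>L \<mu> (tail R)) \<longlonglongrightarrow> integral\<^sup>L \<mu> (\<lambda>y. 0)"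
  proof (rule integral_dominated_convergence[where w="\<lambda>y. dist x0 y powr (p - 1)"])
    show "(\<lambda>y. 0::real) \<in> borel_measurable \<mu>" by simp
    show "\<And>R. tail R \<in> borel_measurable \<mu>" unfolding meas_cong by (rule tail_meas)
    show "integrable \<mu> (\<lambda>y. dist x0 y powr (p - 1))" by (rule mom)
    show "AE y in \<mu>. (\<lambda>R. tail R y) \<longlonglongrightarrow> 0"
    proof (rule AE_I2)
      fix y
      have "eventually (\<lambda>R. tail R y = 0) sequentially" using ev_big[of y] by eventually_elim (simp add: tail_def)
      then show "(\<lambda>R. tail R y) \<longlonglongrightarrow> 0" by (rule tendsto_eventually)
    qed
    show "\<And>R. AE y in \<mu>. norm (tail R y) \<le> dist x0 y powr (p - 1)" by (intro AE_I2) (simp add: tail_def)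
  qed
  have "integral\<^sup>L \<mu> (\<lambda>y. 1::real) = 1" by (simp add: prob_space)
  then have e1: "eventually (\<lambda>R. 3/4 < integral\<^sup>L \<mu> (ind R)) sequentially"
    using l1 by (intro order_tendstoD(1)) auto
  have "(\<lambda>R. p * integral\<^sup>L \<mu> (tail R)) \<longlonglongrightarrow> p * 0" using l2 by (intro tendsto_mult tendsto_const) simp
  then have e2: "eventually (\<lambda>R. p * integral\<^sup>L \<mu> (tail R) < 1/4) sequentially"
    by (intro order_tendstoD(2)) auto
  from eventually_conj[OF e1 e2] show ?thesis by (auto simp: eventually_sequentially)
qed

lemma h_self: "h x0 y = 0" unfolding h_def by simp

lemma bounded_ev:
  assumes R: "3/4 < integral\<^sup>L \<mu> (ind R)" "p * integral\<^sup>L \<mu> (tail R) < 1/4"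
    and l1: "(\<lambda>n. (\<Sum>i<n. ind R (yy i)) / real n) \<longlonglongrightarrow> integral\<^sup>L \<mu> (ind R)"
    and l2: "(\<lambda>n. (\<Sum>i<n. tail R (yy i)) / real n) \<longlonglongrightarrow> integral\<^sup>L \<mu> (tail R)"
  shows "eventually (\<lambda>n. \<forall>x. (\<forall>x'. (\<Sum>i<n. h x (yy i)) \<le> (\<Sum>i<n. h x' (yy i))) \<longrightarrow>
            dist x x0 \<le> 2 * real R + 2 * real R powr p + 1) sequentially"
proof -
  have e1: "eventually (\<lambda>n. 1/2 < (\<Sum>i<n. ind R (yy i)) / real n) sequentially"
    using l1 R(1) by (intro order_tendstoD(1)) auto
  have "(\<lambda>n. p * ((\<Sum>i<n. tail R (yy i)) / real n)) \<longlonglongrightarrow> p * integral\<^sup>L \<mu> (tail R)"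
    using l2 by (intro tendsto_mult tendsto_const)
  then have e2: "eventually (\<lambda>n. p * ((\<Sum>i<n. tail R (yy i)) / real n) < 1/4) sequentially"
    using R(2) by (intro order_tendstoD(2)) auto
  have e3: "eventually (\<lambda>n. 1 \<le> n) sequentially" by (rule eventually_ge_at_top)
  show ?thesis
  using e1 e2 e3
  proof eventually_elim
    case (elim n)
    have npos: "0 < real n" using elim(3) by simp
    define S1 where "S1 = (\<Sum>i<n. ind R (yy i))"
    define S2 where "S2 = (\<Sum>i<n. tail R (yy i))"
    have S1: "real n / 2 < S1" using elim(1) npos unfolding S1_def by (simp add: pos_less_divide_eq)
    have S2: "p * S2 < real n / 4" using elim(2) npos unfolding S2_def by (simp add: pos_divide_less_eq)
    have S20: "0 \<le> S2" unfolding S2_def by (intro sum_nonneg) (simp add: tail_def)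
    show ?case
    proof (intro allI impI)
      fix x assume mn: "\<forall>x'. (\<Sum>i<n. h x (yy i)) \<le> (\<Sum>i<n. h x' (yy i))"
      define D where "D = dist x x0"
      define Rp where "Rp = real R powr p"
      have Rp0: "0 \<le> Rp" unfolding Rp_def by simp
      show "dist x x0 \<le> 2 * real R + 2 * real R powr p + 1"
      proof (rule ccontr)
        assume "\<not> ?thesis"
        then have Dbig: "2 * real R + 2 * Rp + 1 < D" unfolding D_def Rp_def by simp
        define a where "a = D - real R - Rp"
        have a0: "0 < a" using Dbig Rp0 unfolding a_def by linarith
        have D0: "0 \<le> D" unfolding D_def by simp
        have pt: "a * ind R (yy i) - p * D * tail R (yy i) \<le> h x (yy i)" for i
        proof (cases "dist x0 (yy i) \<le> real R")
          case True
          have "D \<le> dist x (yy i) + dist x0 (yy i)" unfolding D_def using dist_triangle[of x x0 "yy i"] by (simp add: dist_commute)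
          then have dxy: "D - real R \<le> dist x (yy i)" using True by linarith
          have ge1: "1 \<le> dist x (yy i)" using dxy Dbig Rp0 by linarith
          have "dist x (yy i) \<le> dist x (yy i) powr p" by (rule le_powr_self[OF ge1 p1])
          moreover have "dist x0 (yy i) powr p \<le> Rp" unfolding Rp_def using True p1 by (intro powr_mono2) auto
          ultimately have "a \<le> h x (yy i)" unfolding a_def h_def using dxy by linarith
          then show ?thesis using True by (simp add: ind_def tail_def)
        next
          case False
          have "- (p * D * dist x0 (yy i) powr (p - 1)) \<le> h x (yy i)" by (rule h_lower) (simp add: D_def)
          then show ?thesis using False by (simp add: ind_def tail_def)
        qed
        have "(\<Sum>i<n. a * ind R (yy i) - p * D * tail R (yy i)) \<le> (\<Sum>i<n. h x (yy i))"
          by (intro sum_mono pt)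
        also have "\<dots> \<le> (\<Sum>i<n. h x0 (yy i))" using mn by blast
        also have "\<dots> = 0" by (simp add: h_self)
        finally have "a * S1 - D * (p * S2) \<le> 0"
          unfolding S1_def S2_def by (simp add: sum_subtractf sum_distrib_left mult.assoc mult.left_commute)
        moreover have "a * (real n / 2) < a * S1" using S1 a0 by (intro mult_strict_left_mono)
        moreover have "D * (p * S2) \<le> D * (real n / 4)" using S2 D0 by (intro mult_left_mono) auto
        ultimately have "a * (real n / 2) < D * (real n / 4)" by linarith
        then have "(2 * a) * real n < D * real n" by (simp add: field_simps)
        then have "2 * a < D" using npos by simp
        then have "2 * D < D + 2 * real R + 2 * Rp" unfolding a_def by (simp add: algebra_simps)
        then show False using Dbig by linarith
      qed
    qed
  qed
qed

end

lemma frequently_subseq: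
  assumes "frequently P sequentially"
  shows "\<exists>r :: nat \<Rightarrow> nat. strict_mono r \<and> (\<forall>k. P (r k))"
proof -
  have "infinite {n. P n}" using assms unfolding frequently_sequentially infinite_nat_iff_unbounded_le by auto
  then obtain r :: "nat \<Rightarrow> nat" where "strict_mono r" "\<And>n. r n \<in> {n. P n}" using infinite_enumerate by blast
  then show ?thesis by auto
qed

theorem corollary4p1:
  fixes M :: "'b measure" and Y :: "nat \<Rightarrow> 'b \<Rightarrow> 'a::metric_space"
    and \<mu> :: "'a measure" and p :: real
  assumes sep: "separable_space TYPE('a)"
    and weak: "admits_weak_convergence TYPE('a)"
    and p: "p \<ge> 1"
    and M: "prob_space M"
    and rv: "\<And>i. Y i \<in> borel_measurable M"
    and indep: "prob_space.indep_vars M (\<lambda>_. borel) Y UNIV"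
    and distr: "\<And>i. distr M borel (Y i) = \<mu>"
    and moment: "\<exists>x. (\<integral>\<^sup>+ y. ennreal (dist x y powr (p - 1)) \<partial>\<mu>) < \<infinity>"
  shows "AE \<omega> in M. (\<lambda>n. SUP xb\<in>Mp p (empirical_measure Y n \<omega>).
                           INF x\<in>Mp p \<mu>. ennreal (dist xb x)) \<longlonglongrightarrow> 0"
proof -
  interpret M: prob_space M by (rule M)
  obtain c :: "(nat \<Rightarrow> 'a) \<Rightarrow> 'a \<Rightarrow> bool" where W: "is_weak_convergence c" using weak unfolding admits_weak_convergence_def by blast
  obtain D :: "'a set" where D: "countable D" "closure D = UNIV" using sep unfolding separable_space_def by blast
  have Dne: "D \<noteq> {}" using D(2) by auto
  define z where "z = from_nat_into D"
  have rz: "range z = D" unfolding z_def using Dne D(1) by simp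
  have dense_z: "\<exists>j. dist (z j) y < e" if e: "e > 0" for y :: 'a and e :: real
  proof -
    have "y \<in> closure D" using D(2) by simp
    then obtain d where d: "d \<in> D" "dist d y < e" using e unfolding closure_approachable by blast
    then obtain j where "d = z j" using rz by blast
    then show ?thesis using d by blast
  qed
  obtain x0 where mom0: "(\<integral>\<^sup>+ y. ennreal (dist x0 y powr (p - 1)) \<partial>\<mu>) < \<infinity>" using moment by blast
  have sets_mu: "sets \<mu> = sets borel" using distr[of 0] by (metis sets_distr)
  have probmu: "prob_space \<mu>" using M.prob_space_distr[OF rv[of 0]] distr[of 0] by simp
  have mc: "borel_measurable \<mu> = borel_measurable borel" by (rule measurable_cong_sets[OF sets_mu refl])
  have momi: "integrable \<mu> (\<lambda>y. dist x0 y powr (p - 1))"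
  proof (rule integrableI_bounded)
    show "(\<lambda>y. dist x0 y powr (p - 1)) \<in> borel_measurable \<mu>" unfolding mc by measurable
    show "(\<integral>\<^sup>+ y. ennreal (norm (dist x0 y powr (p - 1))) \<partial>\<mu>) < \<infinity>" using mom0 by simp
  qed
  have FD: "fm_dense \<mu> p x0 z"
    by (intro fm_dense.intro fm_setup.intro fm_dense_axioms.intro probmu sets_mu p momi dense_z)
  interpret fm_dense \<mu> p x0 z by (rule FD)
  have slln: "AE \<omega> in M. (\<lambda>n. (\<Sum>i<n. f (Y i \<omega>)) / real n) \<longlonglongrightarrow> integral\<^sup>L \<mu> f"
    if "integrable \<mu> f" for f :: "'a \<Rightarrow> real"
    by (rule slln_comp[OF M rv indep distr that])
  have AE1: "AE \<omega> in M. \<forall>j. (\<lambda>n. (\<Sum>i<n. h (z j) (Y i \<omega>)) / real n) \<longlonglongrightarrow> F (z j)"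
    unfolding F_def by (subst AE_all_countable) (intro allI slln h_int)
  have AE2: "AE \<omega> in M. \<forall>R::nat. (\<lambda>n. (\<Sum>i<n. ind R (Y i \<omega>)) / real n) \<longlonglongrightarrow> integral\<^sup>L \<mu> (ind R)
      \<and> (\<lambda>n. (\<Sum>i<n. tail R (Y i \<omega>)) / real n) \<longlonglongrightarrow> integral\<^sup>L \<mu> (tail R)"
    by (subst AE_all_countable) (intro allI AE_conjI slln ind_int tail_int)
  have AE3: "AE \<omega> in M. \<forall>LB :: (nat \<times> rat) list \<times> nat.
      (\<lambda>n. (\<Sum>i<n. lowf z (fst LB) (real (snd LB)) (Y i \<omega>)) / real n) \<longlonglongrightarrow> integral\<^sup>L \<mu> (lowf z (fst LB) (real (snd LB)))"
    by (subst AE_all_countable) (intro allI slln lowf_int, simp)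
  obtain R where R: "3/4 < integral\<^sup>L \<mu> (ind R)" "p * integral\<^sup>L \<mu> (tail R) < 1/4" using R_exists by blast
  define Bd where "Bd = 2 * real R + 2 * real R powr p + 1"
  show ?thesis
  using AE1 AE2 AE3
  proof eventually_elim
    case (elim \<omega>)
    define yy where "yy i = Y i \<omega>" for i
    define f where "f = (\<lambda>n. SUP xb\<in>Mp p (empirical_measure Y n \<omega>). INF x\<in>Mp p \<mu>. ennreal (dist xb x))"
    have evb: "eventually (\<lambda>n. 1 \<le> n \<and> (\<forall>x\<in>Mp p (empirical_measure Y n \<omega>). dist x x0 \<le> Bd)) sequentially"
    proof -
      have l1: "(\<lambda>n. (\<Sum>i<n. ind R (yy i)) / real n) \<longlonglongrightarrow> integral\<^sup>L \<mu> (ind R)"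
        using elim(2) unfolding yy_def by blast
      have l2: "(\<lambda>n. (\<Sum>i<n. tail R (yy i)) / real n) \<longlonglongrightarrow> integral\<^sup>L \<mu> (tail R)"
        using elim(2) unfolding yy_def by blast
      have "eventually (\<lambda>n. \<forall>x. (\<forall>x'. (\<Sum>i<n. h x (yy i)) \<le> (\<Sum>i<n. h x' (yy i))) \<longrightarrow> dist x x0 \<le> Bd) sequentially"
        unfolding Bd_def by (rule bounded_ev[OF R l1 l2])
      moreover have "eventually (\<lambda>n. 1 \<le> n) sequentially" by (rule eventually_ge_at_top)
      ultimately show ?thesis
      proof eventually_elim
        case (elim n)
        then show ?case using emp_Mp[of n _ Y \<omega>] unfolding yy_def by blast
      qed
    qed
    have "f \<longlonglongrightarrow> 0"
    proof (rule order_tendstoI)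
      fix a :: ennreal assume "a < 0" then show "eventually (\<lambda>n. a < f n) sequentially" by simp
    next
      fix a :: ennreal assume a: "0 < a"
      show "eventually (\<lambda>n. f n < a) sequentially"
      proof (rule ccontr)
        assume ne: "\<not> ?thesis"
        obtain b where b: "0 < b" "b < a" using dense_order_class.dense[OF a] by blast
        define e where "e = enn2real b"
        have bfin: "b < top" using b(2) by (simp add: less_le_trans)
        have e0: "0 < e" unfolding e_def using b(1) bfin by (simp add: enn2real_positive_iff)
        have eb: "ennreal e = b" unfolding e_def using bfin by simp
        have fr: "frequently (\<lambda>n. \<not> f n < a) sequentially" using ne by (simp add: not_eventually)
        have fr2: "frequently (\<lambda>n. (1 \<le> n \<and> (\<forall>x\<in>Mp p (empirical_measure Y n \<omega>). dist x x0 \<le> Bd))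
            \<and> (\<exists>xb\<in>Mp p (empirical_measure Y n \<omega>). \<forall>x\<in>Mp p \<mu>. e < dist xb x)) sequentially"
        proof -
          have "frequently (\<lambda>n. (1 \<le> n \<and> (\<forall>x\<in>Mp p (empirical_measure Y n \<omega>). dist x x0 \<le> Bd)) \<and> \<not> f n < a) sequentially"
            by (rule frequently_eventually_conj[OF fr evb])
          then show ?thesis
          proof (rule frequently_elim1)
            fix n assume hn: "(1 \<le> n \<and> (\<forall>x\<in>Mp p (empirical_measure Y n \<omega>). dist x x0 \<le> Bd)) \<and> \<not> f n < a"
            then have "b < f n" using b(2) by (meson leI less_le_trans)
            then obtain xb where xb: "xb \<in> Mp p (empirical_measure Y n \<omega>)"
                "b < (INF x\<in>Mp p \<mu>. ennreal (dist xb x))"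
              unfolding f_def by (auto simp: less_SUP_iff)
            have "\<forall>x\<in>Mp p \<mu>. e < dist xb x"
            proof
              fix x assume "x \<in> Mp p \<mu>"
              with xb(2) have "b < ennreal (dist xb x)" by (rule less_INF_D)
              then have "ennreal e < ennreal (dist xb x)" using eb by simp
              then show "e < dist xb x" using e0 by (simp add: ennreal_less_iff)
            qed
            then show "(1 \<le> n \<and> (\<forall>x\<in>Mp p (empirical_measure Y n \<omega>). dist x x0 \<le> Bd))
                \<and> (\<exists>xb\<in>Mp p (empirical_measure Y n \<omega>). \<forall>x\<in>Mp p \<mu>. e < dist xb x)"
              using hn xb(1) by blast
          qed
        qed
        obtain nk :: "nat \<Rightarrow> nat" where nkp: "strict_mono nk \<and> (\<forall>k. (1 \<le> nk k \<and> (\<forall>x\<in>Mp p (empirical_measure Y (nk k) \<omega>). dist x x0 \<le> Bd))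
            \<and> (\<exists>xb\<in>Mp p (empirical_measure Y (nk k) \<omega>). \<forall>x\<in>Mp p \<mu>. e < dist xb x))"
          using frequently_subseq[OF fr2] by (rule exE)
        have nk1: "strict_mono nk" using nkp by blast
        have nk2: "(1 \<le> nk k \<and> (\<forall>x\<in>Mp p (empirical_measure Y (nk k) \<omega>). dist x x0 \<le> Bd))
            \<and> (\<exists>xb\<in>Mp p (empirical_measure Y (nk k) \<omega>). \<forall>x\<in>Mp p \<mu>. e < dist xb x)" for k
          using nkp by blast
        define xs where "xs k = (SOME xb. xb \<in> Mp p (empirical_measure Y (nk k) \<omega>) \<and> (\<forall>x\<in>Mp p \<mu>. e < dist xb x))" for k
        have xs: "xs k \<in> Mp p (empirical_measure Y (nk k) \<omega>) \<and> (\<forall>x\<in>Mp p \<mu>. e < dist (xs k) x)" for k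
        proof -
          have "\<exists>xb. xb \<in> Mp p (empirical_measure Y (nk k) \<omega>) \<and> (\<forall>x\<in>Mp p \<mu>. e < dist xb x)" using nk2[of k] by blast
          then show ?thesis unfolding xs_def by (rule someI_ex)
        qed
        have xsb: "dist (xs k) x0 \<le> Bd" for k using nk2[of k] xs[of k] by blast
        have "\<exists>r xstar. strict_mono r \<and> c (xs \<circ> r) xstar"
          using W xsb unfolding is_weak_convergence_def by blast
        then obtain r xstar where r: "strict_mono r" "c (xs \<circ> r) xstar" by blast
        define Bn where "Bn = nat \<lceil>Bd\<rceil>"
        have Bn: "Bd \<le> real Bn" unfolding Bn_def by linarith
        have FC: "fm_core \<mu> p x0 z c yy (nk \<circ> r) (xs \<circ> r) xstar Bn"
        proof (rule fm_core.intro[OF FD], rule fm_core_axioms.intro)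
          show "is_weak_convergence c" by (rule W)
          show "\<And>j. (\<lambda>n. (\<Sum>i<n. h (z j) (yy i)) / real n) \<longlonglongrightarrow> F (z j)" using elim(1) unfolding yy_def by blast
          show "(\<lambda>n. (\<Sum>i<n. lowf z L (real B') (yy i)) / real n) \<longlonglongrightarrow> integral\<^sup>L \<mu> (lowf z L (real B'))" for L B'
            using elim(3)[rule_format, of "(L, B')"] unfolding yy_def by simp
          show "strict_mono (nk \<circ> r)" using nk1 r(1) by (simp add: strict_mono_def)
          show "\<And>k. 1 \<le> (nk \<circ> r) k" using nk2 by auto
          show "(\<Sum>i<(nk \<circ> r) k. h ((xs \<circ> r) k) (yy i)) \<le> (\<Sum>i<(nk \<circ> r) k. h x' (yy i))" for k x'
          proof -
            have "1 \<le> nk (r k)" using nk2 by blast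
            then show ?thesis using emp_Mp[of "nk (r k)" "xs (r k)" Y \<omega> x'] xs[of "r k"] unfolding yy_def by simp
          qed
          show "\<And>k. dist ((xs \<circ> r) k) x0 \<le> real Bn" using xsb Bn by (auto intro: order_trans)
          show "c (xs \<circ> r) xstar" by (rule r(2))
        qed
        have "xstar \<in> Mp p \<mu> \<and> (\<exists>s. strict_mono s \<and> (\<lambda>k. dist ((xs \<circ> r) (s k)) xstar) \<longlonglongrightarrow> 0)"
          by (rule fm_core.core[OF FC])
        then obtain s where xm: "xstar \<in> Mp p \<mu>" and s: "(\<lambda>k. dist ((xs \<circ> r) (s k)) xstar) \<longlonglongrightarrow> 0" by blast
        have "eventually (\<lambda>k. dist ((xs \<circ> r) (s k)) xstar < e) sequentially" using s e0 by (rule order_tendstoD(2))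
        then obtain k where k: "dist ((xs \<circ> r) (s k)) xstar < e" by (auto simp: eventually_sequentially)
        have "e < dist (xs (r (s k))) xstar" using xs[of "r (s k)"] xm by blast
        then show False using k by simp
      qed
    qed
    then show ?case unfolding f_def .
  qed
qed

end
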